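(* Let $X,Y,A,B$ be non-empty finite sets. Then $\mathcal R_{\rm lowc}$ is a resource over $(X\times Y,A\times B)$ and $\mathsf{QC}(\mathcal R_{\rm lowc})=\mathcal Q_{\rm lowc}$.
   Context: For $n\in\mathbb N$, finite sets $S_i,T_i$, operators $U_i:\mathbb C^X\to\mathbb C^A\otimes\mathbb C^{S_i}$ with $\sum_{i=1}^nU_i^*U_i=I_X$ and isometries $V_i:\mathbb C^Y\to\mathbb C^B\otimes\mathbb C^{T_i}$, the column $[U_i\otimes V_i]_{i=1}^n:\mathbb C^{XY}\to\bigoplus_i\mathbb C^{AB}\otimes\mathbb C^{S_i}\otimes\mathbb C^{T_i}\cong\mathbb C^{AB}\otimes K$ with $K=\bigoplus_i\mathbb C^{S_i}\otimes\mathbb C^{T_i}$ is an isometry, regarded as a block operator isometry over $(XY,AB)$ with entries in $\mathcal B(\mathbb C,K)$. $\mathcal R_{\rm lowc}$ is the set of all finite entrywise direct sums of such isometries. A block operator isometry over $(Z,C)$ is an isometry $W=(W_{c,z}):H^Z\to L^C$; $\phi_W:\mathcal S_1^{C,Z}\to\mathcal B(H,L)$, $\phi_W(e_ze_c^* )=W_{c,z}$; for a normal state $\sigma$, $\Gamma_{W,\sigma}(\epsilon_{z,z'})=\sum_{c,c'}\sigma(W_{c,z}^*W_{c',z'})\epsilon_{c,c'}$ and $\mathsf{QC}(\mathcal R)=\{\Gamma_{W,\sigma}:W\in\mathcal R\}$. A resource over $(Z,C)$ is a family of block operator isometries closed under finite entrywise direct sums and separating: for every nonzero $S\in\mathcal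 S_1^{C,Z}$ (operators $\mathbb C^C\to\mathbb C^Z$) some $W$ in the family has $\phi_W(S)\neq0$. $\mathcal Q_{\rm lowc}$ is the set of channels $\Gamma=\sum_{i=1}^n\Psi_i\otimes\Phi_i:M_{XY}\to M_{AB}$, where $\Psi_i:M_X\to M_A$ are completely positive with $\sum_i\Psi_i$ trace preserving and $\Phi_i:M_Y\to M_B$ are quantum channels. *)

theory Defs
  imports "Jordan_Normal_Form.Matrix"
begin

(* Finite index sets are represented by their cardinalities
   (a set of size n is {0..<n}).  Products are ordered lexicographically:
   (x,y) in X x Y  <-->  x * card Y + y.  Tensor products of coordinate
   spaces use the same (Kronecker) ordering. *)

definition adj :: "complex mat \<Rightarrow> complex mat" where
  "adj M = mat (dim_col M) (dim_row M) (\<lambda>(i,j). cnj (M $$ (j,i)))"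

definition mtrace :: "complex mat \<Rightarrow> complex" where
  "mtrace M = (\<Sum>i<dim_row M. M $$ (i,i))"

definition psd :: "nat \<Rightarrow> complex mat \<Rightarrow> bool" where
  "psd n P \<longleftrightarrow> P \<in> carrier_mat n n \<and>
     (\<forall>v \<in> carrier_vec n. let q = (\<Sum>i<n. cnj (v $ i) * (P *\<^sub>v v) $ i)
                             in Im q = 0 \<and> Re q \<ge> 0)"

text \<open>density matrices = normal states on B(C^n): sigma(T) = trace(D T)\<close>
definition density :: "nat \<Rightarrow> complex mat \<Rightarrow> bool" where
  "density n D \<longleftrightarrow> psd n D \<and> mtrace D = 1"

definition munit :: "nat \<Rightarrow> nat \<Rightarrow> nat \<Rightarrow> complex mat" where
  "munit n i j = mat n n (\<lambda>(a,b). if a = i \<and> b = j then 1 else 0)"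

definition kron :: "nat \<Rightarrow> nat \<Rightarrow> complex mat \<Rightarrow> complex mat \<Rightarrow> complex mat" where
  "kron m k M N = mat (m*k) (m*k) (\<lambda>(r,s). M $$ (r div k, s div k) * N $$ (r mod k, s mod k))"

type_synonym lmap = "complex mat \<Rightarrow> complex mat"

definition is_lmap :: "nat \<Rightarrow> nat \<Rightarrow> lmap \<Rightarrow> bool" where
  "is_lmap n m \<Psi> \<longleftrightarrow> (\<forall>\<rho> \<in> carrier_mat n n. \<Psi> \<rho> \<in> carrier_mat m m) \<and>
     (\<forall>\<rho> \<in> carrier_mat n n. \<forall>\<sigma> \<in> carrier_mat n n. \<forall>c::complex.
        \<Psi> (c \<cdot>\<^sub>m \<rho> + \<sigma>) = c \<cdot>\<^sub>m \<Psi> \<rho> + \<Psi> \<sigma>)"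

text \<open>the linear map M_n -> M_m with prescribed images E x x' of the matrix units
  (undefined outside M_n, so that equality of such maps is equality on M_n)\<close>
definition from_units :: "nat \<Rightarrow> nat \<Rightarrow> (nat \<Rightarrow> nat \<Rightarrow> complex mat) \<Rightarrow> lmap" where
  "from_units n m E = (\<lambda>\<rho>. if \<rho> \<in> carrier_mat n n
      then mat m m (\<lambda>(i,j). \<Sum>x<n. \<Sum>x'<n. \<rho> $$ (x,x') * E x x' $$ (i,j))
      else undefined)"

definition lsum :: "nat \<Rightarrow> nat \<Rightarrow> nat set \<Rightarrow> (nat \<Rightarrow> lmap) \<Rightarrow> lmap" where
  "lsum n m I \<Psi> = (\<lambda>\<rho>. if \<rho> \<in> carrier_mat n n
      then mat m m (\<lambda>(i,j). \<Sum>k\<in>I. \<Psi> k \<rho> $$ (i,j)) else undefined)"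

text \<open>(id_{M_k} tensor Psi)(P), P in M_k tensor M_n, index (i,x) |-> i*n+x\<close>
definition ampl :: "nat \<Rightarrow> nat \<Rightarrow> nat \<Rightarrow> lmap \<Rightarrow> complex mat \<Rightarrow> complex mat" where
  "ampl k n m \<Psi> P = mat (k*m) (k*m) (\<lambda>(r,s).
      \<Psi> (mat n n (\<lambda>(a,b). P $$ ((r div m)*n + a, (s div m)*n + b))) $$ (r mod m, s mod m))"

definition cp :: "nat \<Rightarrow> nat \<Rightarrow> lmap \<Rightarrow> bool" where
  "cp n m \<Psi> \<longleftrightarrow> is_lmap n m \<Psi> \<and>
     (\<forall>k. \<forall>P. psd (k*n) P \<longrightarrow> psd (k*m) (ampl k n m \<Psi> P))"

definition tp :: "nat \<Rightarrow> lmap \<Rightarrow> bool" where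
  "tp n \<Psi> \<longleftrightarrow> (\<forall>\<rho> \<in> carrier_mat n n. mtrace (\<Psi> \<rho>) = mtrace \<rho>)"

definition qchannel :: "nat \<Rightarrow> nat \<Rightarrow> lmap \<Rightarrow> bool" where
  "qchannel n m \<Phi> \<longleftrightarrow> cp n m \<Phi> \<and> tp n \<Phi>"

definition ltensor :: "nat \<Rightarrow> nat \<Rightarrow> nat \<Rightarrow> nat \<Rightarrow> lmap \<Rightarrow> lmap \<Rightarrow> lmap" where
  "ltensor nX nY nA nB \<Psi> \<Phi> = from_units (nX*nY) (nA*nB) (\<lambda>p p'.
      kron nA nB (\<Psi> (munit nX (p div nY) (p' div nY))) (\<Phi> (munit nY (p mod nY) (p' mod nY))))"

definition Q_lowc :: "nat \<Rightarrow> nat \<Rightarrow> nat \<Rightarrow> nat \<Rightarrow> lmap set" where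
  "Q_lowc nX nY nA nB = {lsum (nX*nY) (nA*nB) {..<N} (\<lambda>i. ltensor nX nY nA nB (\<Psi> i) (\<Phi> i)) | N \<Psi> \<Phi>.
      (\<forall>i<N. cp nX nA (\<Psi> i)) \<and> tp nX (lsum nX nA {..<N} \<Psi>) \<and> (\<forall>i<N. qchannel nY nB (\<Phi> i))}"

text \<open>A block operator isometry over (Z,C) with H = C^h, L = C^l is a triple (h,l,W)
  where W : H^Z -> L^C is a (C*l) x (Z*h) matrix; row index c*l+k, column index z*h+j;
  the block W_{c,z} in B(H,L) is the l x h submatrix at rows c*l.., columns z*h..\<close>
type_synonym boi = "nat \<times> nat \<times> complex mat"

fun is_boi :: "nat \<Rightarrow> nat \<Rightarrow> boi \<Rightarrow> bool" where
  "is_boi nZ nC (h, l, W) \<longleftrightarrow> W \<in> carrier_mat (nC*l) (nZ*h) \<and> adj W * W = 1\<^sub>m (nZ*h)"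

fun blk :: "boi \<Rightarrow> nat \<Rightarrow> nat \<Rightarrow> complex mat" where
  "blk (h, l, W) c z = mat l h (\<lambda>(k,j). W $$ (c*l + k, z*h + j))"

text \<open>phi_W(S) = sum_{z,c} S_{z,c} W_{c,z}, for S : C^C -> C^Z (an nZ x nC matrix)\<close>
fun phi :: "nat \<Rightarrow> nat \<Rightarrow> boi \<Rightarrow> complex mat \<Rightarrow> complex mat" where
  "phi nZ nC (h, l, W) S = mat l h (\<lambda>(k,j). \<Sum>z<nZ. \<Sum>c<nC. S $$ (z,c) * blk (h,l,W) c z $$ (k,j))"

text \<open>entrywise direct sum: (W1 (+) W2)_{c,z} = W1_{c,z} (+) W2_{c,z} : H1(+)H2 -> L1(+)L2\<close>
fun bdsum :: "nat \<Rightarrow> nat \<Rightarrow> boi \<Rightarrow> boi \<Rightarrow> boi" where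
  "bdsum nZ nC (h1, l1, W1) (h2, l2, W2) = (h1+h2, l1+l2,
     mat (nC*(l1+l2)) (nZ*(h1+h2)) (\<lambda>(r,s).
       let c = r div (l1+l2); k = r mod (l1+l2); z = s div (h1+h2); j = s mod (h1+h2) in
       if k < l1 \<and> j < h1 then blk (h1,l1,W1) c z $$ (k,j)
       else if l1 \<le> k \<and> h1 \<le> j then blk (h2,l2,W2) c z $$ (k-l1, j-h1)
       else 0))"

definition is_resource :: "nat \<Rightarrow> nat \<Rightarrow> boi set \<Rightarrow> bool" where
  "is_resource nZ nC R \<longleftrightarrow>
     (\<forall>W\<in>R. is_boi nZ nC W) \<and>
     (\<forall>W1\<in>R. \<forall>W2\<in>R. bdsum nZ nC W1 W2 \<in> R) \<and>
     (\<forall>S \<in> carrier_mat nZ nC. S \<noteq> 0\<^sub>m nZ nC \<longrightarrow>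
        (\<exists>W\<in>R. phi nZ nC W S \<noteq> 0\<^sub>m (fst (snd W)) (fst W)))"

text \<open>Gamma_{W,sigma}(eps_{z,z'}) = sum_{c,c'} sigma(W_{c,z}^* W_{c',z'}) eps_{c,c'},
  sigma(T) = trace(D T), extended linearly\<close>
fun Gamma :: "nat \<Rightarrow> nat \<Rightarrow> boi \<Rightarrow> complex mat \<Rightarrow> lmap" where
  "Gamma nZ nC (h, l, W) D = from_units nZ nC (\<lambda>z z'.
      mat nC nC (\<lambda>(c,c'). mtrace (D * (adj (blk (h,l,W) c z) * blk (h,l,W) c' z'))))"

definition QC :: "nat \<Rightarrow> nat \<Rightarrow> boi set \<Rightarrow> lmap set" where
  "QC nZ nC R = {Gamma nZ nC W D | W D. W \<in> R \<and> density (fst W) D}"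

text \<open>Generator: sizes s i = |S_i|, t i = |T_i|, U i : C^X -> C^A (x) C^{S_i}
  ((nA * s i) x nX matrix), V i : C^Y -> C^B (x) C^{T_i}.  K = (+)_i C^{S_i}(x)C^{T_i},
  summand i starting at offset sum_{j<i} s j * t j, with (s,t) |-> s * t i + t.
  The result has H = C (h = 1) and L = K.\<close>
definition lowc_gen :: "nat \<Rightarrow> nat \<Rightarrow> nat \<Rightarrow> nat \<Rightarrow> nat \<Rightarrow> (nat \<Rightarrow> nat) \<Rightarrow> (nat \<Rightarrow> nat)
    \<Rightarrow> (nat \<Rightarrow> complex mat) \<Rightarrow> (nat \<Rightarrow> complex mat) \<Rightarrow> boi" where
  "lowc_gen nX nY nA nB n s t U V =
    (let kd = (\<Sum>i<n. s i * t i); off = (\<lambda>i. \<Sum>j<i. s j * t j) in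
     (1, kd, mat ((nA*nB)*kd) ((nX*nY)*1) (\<lambda>(r,col).
        let ab = r div kd; k = r mod kd; a = ab div nB; b = ab mod nB;
            x = col div nY; y = col mod nY in
        \<Sum>i<n. \<Sum>p<s i * t i. if k = off i + p
           then U i $$ (a * s i + p div t i, x) * V i $$ (b * t i + p mod t i, y) else 0)))"

inductive_set R_lowc :: "nat \<Rightarrow> nat \<Rightarrow> nat \<Rightarrow> nat \<Rightarrow> boi set"
  for nX nY nA nB :: nat where
  gen: "\<lbrakk> \<forall>i<n. U i \<in> carrier_mat (nA * s i) nX;
          \<forall>i<n. V i \<in> carrier_mat (nB * t i) nY;
          \<forall>i<n. adj (V i) * V i = 1\<^sub>m nY;
          mat nX nX (\<lambda>(x,x'). \<Sum>i<n. (adj (U i) * U i) $$ (x,x')) = 1\<^sub>m nX \<rbrakk>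
        \<Longrightarrow> lowc_gen nX nY nA nB n s t U V \<in> R_lowc nX nY nA nB"
| dsum: "\<lbrakk> W1 \<in> R_lowc nX nY nA nB; W2 \<in> R_lowc nX nY nA nB \<rbrakk>
        \<Longrightarrow> bdsum (nX*nY) (nA*nB) W1 W2 \<in> R_lowc nX nY nA nB"

end

theory Submission
  imports Defs
begin


lemma sum_lessThan_add:
  "(\<Sum>r<(a::nat)+b. f r) = (\<Sum>r<a. f r) + (\<Sum>j<b. (f (a+j)::'a::comm_monoid_add))"
  by (induction b) (simp_all add: add.assoc)

lemma sum_split_mult:
  "(\<Sum>r<(k::nat)*m. f r) = (\<Sum>i<k. \<Sum>a<m. (f (i*m+a)::'a::comm_monoid_add))"
proof (induction k)
  case 0 then show ?case by simp
next
  case (Suc k)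
  have "(\<Sum>r<Suc k*m. f r) = (\<Sum>r<k*m. f r) + (\<Sum>a<m. f (k*m+a))"
    using sum_lessThan_add[where a="k*m" and b=m and f=f] by (simp add: add.commute)
  then show ?case using Suc by simp
qed

lemma sum_blocks:
  "(\<Sum>k<(\<Sum>i<(n::nat). (m i::nat)). g k) = (\<Sum>i<n. \<Sum>p<m i. (g ((\<Sum>j<i. m j) + p)::'a::comm_monoid_add))"
  by (induction n) (simp_all add: sum_lessThan_add)

lemma block_unique:
  fixes m :: "nat \<Rightarrow> nat"
  assumes "i < n" "j < n" "p < m i" "q < m j" "(\<Sum>l<i. m l) + p = (\<Sum>l<j. m l) + q"
  shows "i = j \<and> p = q"
proof -
  have lt: "(\<Sum>l<i. m l) + p < (\<Sum>l<j. m l)" if "i < j" "p < m i" for i j p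
  proof -
    have "(\<Sum>l<Suc i. m l) \<le> (\<Sum>l<j. m l)"
      using that by (intro sum_mono2) auto
    then show ?thesis using that by simp
  qed
  have "i = j"
    using lt[of i j p] lt[of j i q] assms by (metis linorder_neqE_nat not_add_less1 add_lessD1)
  then show ?thesis using assms by simp
qed

lemma block_lookup:
  fixes m :: "nat \<Rightarrow> nat"
  assumes "j < n" "q < m j"
  shows "(\<Sum>i<n. \<Sum>p<m i. if (\<Sum>l<j. m l) + q = (\<Sum>l<i. m l) + p then f i p else 0) = (f j q :: 'a::comm_monoid_add)"
proof -
  have "(\<Sum>i<n. \<Sum>p<m i. if (\<Sum>l<j. m l) + q = (\<Sum>l<i. m l) + p then f i p else 0)
      = (\<Sum>i<n. if i = j then f j q else 0)"
  proof (rule sum.cong[OF refl])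
    fix i assume i: "i \<in> {..<n}"
    show "(\<Sum>p<m i. if (\<Sum>l<j. m l) + q = (\<Sum>l<i. m l) + p then f i p else 0) = (if i = j then f j q else 0)"
    proof (cases "i = j")
      case True
      then show ?thesis using assms by (simp add: sum.delta')
    next
      case False
      have "(\<Sum>p<m i. if (\<Sum>l<j. m l) + q = (\<Sum>l<i. m l) + p then f i p else 0) = (\<Sum>p<m i. 0)"
        using block_unique[of i n j p m q] False i assms by (intro sum.cong) (auto dest: block_unique)
      then show ?thesis using False by simp
    qed
  qed
  also have "\<dots> = f j q" using assms by (simp add: sum.delta')
  finally show ?thesis .
qed



definition nn :: "complex \<Rightarrow> bool" where "nn z \<longleftrightarrow> Im z = 0 \<and> Re z \<ge> 0"

definition qf :: "nat \<Rightarrow> (nat \<Rightarrow> nat \<Rightarrow> complex) \<Rightarrow> (nat \<Rightarrow> complex) \<Rightarrow> complex" where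
  "qf n C v = (\<Sum>i<n. \<Sum>j<n. cnj (v i) * C i j * v j)"

definition psdf :: "nat \<Rightarrow> (nat \<Rightarrow> nat \<Rightarrow> complex) \<Rightarrow> bool" where
  "psdf n C \<longleftrightarrow> (\<forall>v. nn (qf n C v))"

lemma nn_add: "nn a \<Longrightarrow> nn b \<Longrightarrow> nn (a + b)" by (simp add: nn_def)
lemma nn_mult: "nn a \<Longrightarrow> nn b \<Longrightarrow> nn (a * b)" by (simp add: nn_def)
lemma nn_sum: "(\<And>i. i \<in> I \<Longrightarrow> nn (f i)) \<Longrightarrow> nn (sum f I)"
  by (induction I rule: infinite_finite_induct) (auto simp: nn_def intro: nn_add)
lemma nn_cnj_mult: "nn (cnj a * a)"
  by (simp add: nn_def)

lemma qf_support:
  assumes "S \<subseteq> {..<n}" "\<And>k. k \<notin> S \<Longrightarrow> v k = 0"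
  shows "qf n C v = (\<Sum>i\<in>S. \<Sum>j\<in>S. cnj (v i) * C i j * v j)"
proof -
  have fin: "finite S" using assms(1) finite_subset by blast
  have "qf n C v = (\<Sum>i<n. \<Sum>j\<in>S. cnj (v i) * C i j * v j)"
    unfolding qf_def
    by (intro sum.cong refl sum.mono_neutral_right) (use assms fin in auto)
  also have "\<dots> = (\<Sum>i\<in>S. \<Sum>j\<in>S. cnj (v i) * C i j * v j)"
    by (intro sum.mono_neutral_right) (use assms fin in auto)
  finally show ?thesis .
qed

lemma psdf_diag:
  assumes "psdf n C" "i < n" shows "nn (C i i)"
proof -
  have "qf n C (\<lambda>k. if k = i then 1 else 0) = C i i"
    using assms by (subst qf_support[where S="{i}"]) auto
  then show ?thesis using assms unfolding psdf_def by metis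
qed

lemma psdf_herm:
  assumes "psdf n C" "i < n" "j < n" shows "C j i = cnj (C i j)"
proof (cases "i = j")
  case True
  then show ?thesis using psdf_diag[OF assms(1,2)] by (simp add: nn_def complex_eq_iff)
next
  case False
  have di: "Im (C i i) = 0" "Im (C j j) = 0" using psdf_diag assms by (auto simp: nn_def)
  have "qf n C (\<lambda>k. if k = i then 1 else if k = j then 1 else 0) = C i i + C i j + C j i + C j j"
    using assms False by (subst qf_support[where S="{i,j}"]) auto
  then have "nn (C i i + C i j + C j i + C j j)"
    using assms(1) unfolding psdf_def by metis
  then have 1: "Im (C i j + C j i) = 0" using di by (simp add: nn_def)
  have "qf n C (\<lambda>k. if k = i then 1 else if k = j then \<i> else 0) = C i i + \<i> * C i j - \<i> * C j i + C j j"
    using assms False by (subst qf_support[where S="{i,j}"]) (auto simp: algebra_simps)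
  then have "nn (C i i + \<i> * C i j - \<i> * C j i + C j j)"
    using assms(1) unfolding psdf_def by metis
  then have 2: "Re (C i j - C j i) = 0" using di by (simp add: nn_def)
  show ?thesis using 1 2 by (simp add: complex_eq_iff)
qed



lemma psdf_zero_col:
  assumes "psdf n C" "i < n" "j < n" "C j j = 0" shows "C i j = 0"
proof (rule ccontr)
  assume ne: "C i j \<noteq> 0"
  then have "i \<noteq> j" using assms by auto
  define t where "t = - complex_of_real (Re (C i i) + 1) / C i j"
  have ct: "C i j * t = - complex_of_real (Re (C i i) + 1)" using ne by (simp add: t_def)
  have h: "C j i = cnj (C i j)" using psdf_herm assms by blast
  have "qf n C (\<lambda>k. if k = i then 1 else if k = j then t else 0) = C i i + C i j * t + cnj t * C j i"
    using assms \<open>i \<noteq> j\<close> by (subst qf_support[where S="{i,j}"]) (auto simp: algebra_simps)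
  also have "\<dots> = C i i + C i j * t + cnj (C i j * t)" using h by simp
  also have "\<dots> = C i i - 2 * complex_of_real (Re (C i i) + 1)" by (simp add: ct)
  finally have "nn (C i i - 2 * complex_of_real (Re (C i i) + 1))"
    using assms(1) unfolding psdf_def by metis
  moreover have "Re (C i i) \<ge> 0" using psdf_diag[OF assms(1,2)] by (simp add: nn_def)
  ultimately show False by (simp add: nn_def)
qed

lemma qf_Suc:
  "qf (Suc n) C u = qf n C u + cnj (u n) * (\<Sum>j<n. C n j * u j) + (\<Sum>i<n. cnj (u i) * C i n) * u n
     + cnj (u n) * C n n * u n"
  unfolding qf_def by (simp add: sum.distrib sum_distrib_left sum_distrib_right algebra_simps)

lemma qf_cong:
  assumes "\<And>i j. i < n \<Longrightarrow> j < n \<Longrightarrow> C i j = C' i j" "\<And>i. i < n \<Longrightarrow> u i = v i"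
  shows "qf n C u = qf n C' v"
  unfolding qf_def using assms by (intro sum.cong) auto

lemma qf_rank1:
  "qf n (\<lambda>i j. C i j - w i * cnj (w j)) u = qf n C u - cnj (\<Sum>j<n. cnj (w j) * u j) * (\<Sum>j<n. cnj (w j) * u j)"
proof -
  have "qf n (\<lambda>i j. C i j - w i * cnj (w j)) u = qf n C u - (\<Sum>i<n. \<Sum>j<n. cnj (u i) * (w i * cnj (w j)) * u j)"
    unfolding qf_def by (simp add: sum_subtractf algebra_simps)
  also have "(\<Sum>i<n. \<Sum>j<n. cnj (u i) * (w i * cnj (w j)) * u j) = (\<Sum>i<n. \<Sum>j<n. (cnj (u i) * w i) * (cnj (w j) * u j))"
    by (intro sum.cong refl) (simp add: algebra_simps)
  also have "\<dots> = (\<Sum>i<n. cnj (u i) * w i) * (\<Sum>j<n. cnj (w j) * u j)"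
    by (simp add: sum_product)
  also have "(\<Sum>i<n. cnj (u i) * w i) = cnj (\<Sum>j<n. cnj (w j) * u j)"
    by (simp add: mult.commute)
  finally show ?thesis .
qed

lemma gram:
  "psdf n C \<Longrightarrow> \<exists>r M. \<forall>i<n. \<forall>j<n. C i j = (\<Sum>s<(r::nat). M i s * cnj (M j s))"
proof (induction n arbitrary: C)
  case 0 then show ?case by auto
next
  case (Suc n)
  have psd: "psdf (Suc n) C" by fact
  have herm: "\<And>i j. i < Suc n \<Longrightarrow> j < Suc n \<Longrightarrow> C j i = cnj (C i j)" using psdf_herm[OF psd] by blast
  have nnn: "nn (C n n)" using psdf_diag[OF psd] by simp
  define c where "c = Re (C n n)"
  have Cnn: "C n n = complex_of_real c" using nnn by (simp add: c_def nn_def complex_eq_iff)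
  have c0: "c \<ge> 0" using nnn by (simp add: c_def nn_def)
  show ?case
  proof (cases "c = 0")
    case True
    have col: "C i n = 0" if "i < Suc n" for i using psdf_zero_col[OF psd that, of n] Cnn True by simp
    have row: "C n j = 0" if "j < Suc n" for j using col[OF that] herm[OF that, of n] by simp
    have "psdf n C"
      unfolding psdf_def
    proof
      fix v
      have "qf n C v = qf n C (\<lambda>k. if k < n then v k else 0)" by (rule qf_cong) auto
      also have "\<dots> = qf (Suc n) C (\<lambda>k. if k < n then v k else 0)"
        by (simp add: qf_Suc)
      finally have "qf n C v = qf (Suc n) C (\<lambda>k. if k < n then v k else 0)" .
      then show "nn (qf n C v)" using psd unfolding psdf_def by metis
    qed
    then obtain r M where M: "\<forall>i<n. \<forall>j<n. C i j = (\<Sum>s<(r::nat). M i s * cnj (M j s))"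
      using Suc.IH by blast
    show ?thesis
    proof (intro exI allI impI)
      fix i j assume ij: "i < Suc n" "j < Suc n"
      show "C i j = (\<Sum>s<r. (\<lambda>i s. if i < n then M i s else 0) i s * cnj ((\<lambda>i s. if i < n then M i s else 0) j s))"
        using M ij col row by (cases "i < n"; cases "j < n") (auto simp: less_Suc_eq)
    qed
  next
    case False
    then have cpos: "c > 0" using c0 by simp
    define sc where "sc = complex_of_real (sqrt c)"
    have sc0: "sc \<noteq> 0" using cpos by (simp add: sc_def)
    have scc: "cnj sc = sc" by (simp add: sc_def)
    have scsq: "sc * sc = C n n" using c0 by (simp add: sc_def Cnn flip: of_real_mult)
    define w where "w i = C i n / sc" for i
    have wn: "w n = sc" using sc0 scsq by (simp add: w_def field_simps)
    define C' where "C' i j = C i j - w i * cnj (w j)" for i j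
    have C'col: "C' i n = 0" if "i < Suc n" for i
    proof -
      have "C' i n = C i n - (C i n / sc) * sc" by (simp add: C'_def wn scc w_def[of i])
      then show ?thesis using sc0 by simp
    qed
    have C'row: "C' n j = 0" if "j < Suc n" for j
    proof -
      have "C' n j = C n j - sc * cnj (C j n / sc)" by (simp add: C'_def wn w_def[of j])
      then show ?thesis using sc0 scc herm[OF that, of n] by simp
    qed
    have "psdf n C'"
      unfolding psdf_def
    proof
      fix v
      define t where "t = - (\<Sum>j<n. cnj (w j) * v j) / sc"
      define u where "u k = (if k < n then v k else t)" for k
      have alpha: "(\<Sum>j<Suc n. cnj (w j) * u j) = 0"
        using sc0 by (simp add: u_def t_def wn scc)
      have z1: "(\<Sum>j<n. C' n j * u j) = 0" using C'row by (intro sum.neutral) auto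
      have z2: "(\<Sum>i<n. cnj (u i) * C' i n) = 0" using C'col by (intro sum.neutral) auto
      have "qf n C' v = qf n C' u" by (rule qf_cong) (auto simp: u_def)
      also have "\<dots> = qf (Suc n) C' u"
        using C'col[of n] by (simp add: qf_Suc z1 z2)
      also have "\<dots> = qf (Suc n) C u"
        unfolding C'_def qf_rank1 alpha by simp
      finally show "nn (qf n C' v)" using psd unfolding psdf_def by metis
    qed
    then obtain r M where M: "\<forall>i<n. \<forall>j<n. C' i j = (\<Sum>s<(r::nat). M i s * cnj (M j s))"
      using Suc.IH by blast
    define M' where "M' i s = (if s < r then (if i < n then M i s else 0) else w i)" for i s
    show ?thesis
    proof (intro exI allI impI)
      fix i j assume ij: "i < Suc n" "j < Suc n"
      have "(\<Sum>s<Suc r. M' i s * cnj (M' j s)) = (\<Sum>s<r. M' i s * cnj (M' j s)) + w i * cnj (w j)"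
        by (simp add: M'_def)
      also have "\<dots> = C i j"
      proof (cases "i < n \<and> j < n")
        case True
        then have "C' i j = (\<Sum>s<r. M i s * cnj (M j s))" using M by blast
        then show ?thesis using True by (simp add: M'_def C'_def algebra_simps)
      next
        case False
        then have "i = n \<or> j = n" using ij by auto
        then have "C' i j = 0" using C'col C'row ij by auto
        moreover have "(\<Sum>s<r. M' i s * cnj (M' j s)) = 0"
          using False ij by (auto simp: M'_def)
        ultimately show ?thesis by (simp add: C'_def)
      qed
      finally show "C i j = (\<Sum>s<Suc r. M' i s * cnj (M' j s))" by simp
    qed
  qed
qed



lemma divmod_simps[simp]:
  fixes j x n :: nat
  assumes "x < n"
  shows "(j*n+x) div n = j" "(j*n+x) mod n = x"
  using assms by auto

lemma psd_iff: "psd n P \<longleftrightarrow> P \<in> carrier_mat n n \<and> psdf n (\<lambda>i j. P $$ (i,j))"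
proof -
  have q: "(\<Sum>i<n. cnj (v $ i) * (P *\<^sub>v v) $ i) = qf n (\<lambda>i j. P $$ (i,j)) (\<lambda>i. v $ i)"
    if "P \<in> carrier_mat n n" "v \<in> carrier_vec n" for v
    unfolding qf_def using that
    by (intro sum.cong refl) (auto simp: scalar_prod_def sum_distrib_left atLeast0LessThan algebra_simps)
  show ?thesis
  proof
    assume "psd n P"
    then have P: "P \<in> carrier_mat n n" and h: "\<forall>v\<in>carrier_vec n. nn (\<Sum>i<n. cnj (v $ i) * (P *\<^sub>v v) $ i)"
      unfolding psd_def nn_def Let_def by auto
    have "nn (qf n (\<lambda>i j. P $$ (i,j)) f)" for f
    proof -
      have "qf n (\<lambda>i j. P $$ (i,j)) f = qf n (\<lambda>i j. P $$ (i,j)) (\<lambda>i. vec n f $ i)"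
        by (rule qf_cong) auto
      then show ?thesis using h[rule_format, of "vec n f"] q[OF P, of "vec n f"] by simp
    qed
    then show "P \<in> carrier_mat n n \<and> psdf n (\<lambda>i j. P $$ (i,j))" using P unfolding psdf_def by auto
  next
    assume a: "P \<in> carrier_mat n n \<and> psdf n (\<lambda>i j. P $$ (i,j))"
    then show "psd n P" unfolding psd_def Let_def using q a unfolding psdf_def nn_def by metis
  qed
qed

lemma qf_lin:
  "qf N (\<lambda>r t. d * (\<Sum>s\<in>S. B s r t)) v = d * (\<Sum>s\<in>S. qf N (B s) v)"
  unfolding qf_def by (simp add: sum_distrib_left sum_distrib_right algebra_simps sum.swap[of _ S])

lemma qf_congruence:
  "qf N (\<lambda>r t. \<Sum>u<M. \<Sum>u'<M. X r u * P u u' * cnj (X t u')) v = qf M P (\<lambda>u. \<Sum>t<N. cnj (X t u) * v t)"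
proof -
  have "qf N (\<lambda>r t. \<Sum>u<M. \<Sum>u'<M. X r u * P u u' * cnj (X t u')) v =
        (\<Sum>r<N. \<Sum>t<N. \<Sum>u<M. \<Sum>u'<M. cnj (v r) * X r u * P u u' * cnj (X t u') * v t)"
    unfolding qf_def by (simp add: sum_distrib_left sum_distrib_right mult.assoc)
  also have "\<dots> = (\<Sum>u<M. \<Sum>u'<M. \<Sum>r<N. \<Sum>t<N. cnj (v r) * X r u * P u u' * cnj (X t u') * v t)"
    by (simp only: sum.swap[where A="{..<N}" and B="{..<M}"])
  also have "\<dots> = qf M P (\<lambda>u. \<Sum>t<N. cnj (X t u) * v t)"
    unfolding qf_def by (simp add: sum_distrib_left sum_distrib_right mult.assoc mult.commute mult.left_commute)
  finally show ?thesis .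
qed



lemma sum_block_select:
  fixes c k n :: nat
  assumes "c < k"
  shows "(\<Sum>u<k*n. if u div n = c then f u else 0) = (\<Sum>x<n. (f (c*n+x) :: 'a::comm_monoid_add))"
proof -
  have "(\<Sum>u<k*n. if u div n = c then f u else 0) = (\<Sum>j<k. \<Sum>x<n. if j = c then f (j*n+x) else 0)"
    by (subst sum_split_mult) (intro sum.cong refl, auto)
  also have "\<dots> = (\<Sum>j<k. if j = c then (\<Sum>x<n. f (j*n+x)) else 0)"
    by (intro sum.cong refl) auto
  also have "\<dots> = (\<Sum>x<n. f (c*n+x))" using assms by simp
  finally show ?thesis .
qed

lemma sum_if_cond: "(\<Sum>u\<in>S. if A then g u else 0) = (if A then sum g S else 0)"
  by simp

definition kr :: "nat \<Rightarrow> nat \<Rightarrow> nat \<Rightarrow> complex mat \<Rightarrow> complex \<Rightarrow> lmap" where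
  "kr n m s U d = (\<lambda>\<rho>. mat m m (\<lambda>(a,a'). d * (\<Sum>\<sigma><s. \<Sum>x<n. \<Sum>x'<n.
      \<rho> $$ (x,x') * cnj (U $$ (a*s+\<sigma>, x)) * U $$ (a'*s+\<sigma>, x'))))"

lemma kr_carrier[simp]: "kr n m s U d \<rho> \<in> carrier_mat m m"
  by (simp add: kr_def)

lemma kr_dims[simp]: "dim_row (kr n m s U d \<rho>) = m" "dim_col (kr n m s U d \<rho>) = m"
  by (simp_all add: kr_def)

lemma kr_index: "a < m \<Longrightarrow> a' < m \<Longrightarrow> kr n m s U d \<rho> $$ (a,a') = d * (\<Sum>\<sigma><s. \<Sum>x<n. \<Sum>x'<n.
      \<rho> $$ (x,x') * cnj (U $$ (a*s+\<sigma>, x)) * U $$ (a'*s+\<sigma>, x'))"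
  by (simp add: kr_def)

lemma kr_lmap: "is_lmap n m (kr n m s U d)"
  unfolding is_lmap_def
proof (intro conjI ballI allI)
  fix \<rho> \<sigma> :: "complex mat" and c :: complex
  assume r: "\<rho> \<in> carrier_mat n n" and s: "\<sigma> \<in> carrier_mat n n"
  show "kr n m s U d (c \<cdot>\<^sub>m \<rho> + \<sigma>) = c \<cdot>\<^sub>m kr n m s U d \<rho> + kr n m s U d \<sigma>"
  proof (rule eq_matI)
    fix i j assume ij: "i < dim_row (c \<cdot>\<^sub>m kr n m s U d \<rho> + kr n m s U d \<sigma>)"
       "j < dim_col (c \<cdot>\<^sub>m kr n m s U d \<rho> + kr n m s U d \<sigma>)"
    then have ij': "i < m" "j < m" by auto
    show "kr n m s U d (c \<cdot>\<^sub>m \<rho> + \<sigma>) $$ (i, j) = (c \<cdot>\<^sub>m kr n m s U d \<rho> + kr n m s U d \<sigma>) $$ (i, j)"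
      using ij' r s by (simp add: kr_index sum.distrib sum_distrib_left algebra_simps)
  qed auto
qed (simp)

lemma kr_cp:
  assumes d: "nn d"
  shows "cp n m (kr n m s U d)"
  unfolding cp_def
proof (intro conjI allI impI kr_lmap)
  fix k P assume P: "psd (k*n) P"
  then have Pc: "P \<in> carrier_mat (k*n) (k*n)" and Pp: "psdf (k*n) (\<lambda>i j. P $$ (i,j))"
    by (auto simp: psd_iff)
  define A where "A = ampl k n m (kr n m s U d) P"
  define X where "X \<sigma> r u = (if u div n = r div m then cnj (U $$ ((r mod m)*s+\<sigma>, u mod n)) else 0)" for \<sigma> r u
  have Ac: "A \<in> carrier_mat (k*m) (k*m)" by (simp add: A_def ampl_def)
  have entry: "A $$ (r,t) = d * (\<Sum>\<sigma><s. \<Sum>u<k*n. \<Sum>u'<k*n. X \<sigma> r u * P $$ (u,u') * cnj (X \<sigma> t u'))"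
    if rt: "r < k*m" "t < k*m" for r t
  proof -
    have m0: "m > 0" using rt by (cases m) auto
    have rk: "r div m < k" "t div m < k" using rt by (auto simp: less_mult_imp_div_less)
    have "A $$ (r,t) = d * (\<Sum>\<sigma><s. \<Sum>x<n. \<Sum>x'<n. P $$ ((r div m)*n+x, (t div m)*n+x') *
          cnj (U $$ ((r mod m)*s+\<sigma>, x)) * U $$ ((t mod m)*s+\<sigma>, x'))"
      using rt m0 by (simp add: A_def ampl_def kr_index)
    also have "\<dots> = d * (\<Sum>\<sigma><s. \<Sum>u<k*n. \<Sum>u'<k*n. X \<sigma> r u * P $$ (u,u') * cnj (X \<sigma> t u'))"
    proof -
      have "(\<Sum>u<k*n. \<Sum>u'<k*n. X \<sigma> r u * P $$ (u,u') * cnj (X \<sigma> t u')) =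
            (\<Sum>x<n. \<Sum>x'<n. P $$ ((r div m)*n+x, (t div m)*n+x') *
          cnj (U $$ ((r mod m)*s+\<sigma>, x)) * U $$ ((t mod m)*s+\<sigma>, x'))" for \<sigma>
      proof -
        have "(\<Sum>u<k*n. \<Sum>u'<k*n. X \<sigma> r u * P $$ (u,u') * cnj (X \<sigma> t u')) =
           (\<Sum>u<k*n. if u div n = r div m then (\<Sum>u'<k*n. if u' div n = t div m then
              cnj (U $$ ((r mod m)*s+\<sigma>, u mod n)) * P $$ (u,u') * U $$ ((t mod m)*s+\<sigma>, u' mod n) else 0) else 0)"
          by (auto simp: X_def intro!: sum.cong)
        also have "\<dots> = (\<Sum>x<n. \<Sum>x'<n. cnj (U $$ ((r mod m)*s+\<sigma>, x)) * P $$ ((r div m)*n+x, (t div m)*n+x') * U $$ ((t mod m)*s+\<sigma>, x'))"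
          using rk by (simp add: sum_block_select)
        finally show ?thesis by (simp add: algebra_simps)
      qed
      then show ?thesis by simp
    qed
    finally show ?thesis .
  qed
  have "psdf (k*m) (\<lambda>r t. A $$ (r,t))"
    unfolding psdf_def
  proof
    fix v
    have "qf (k*m) (\<lambda>r t. A $$ (r,t)) v = qf (k*m) (\<lambda>r t. d * (\<Sum>\<sigma>\<in>{..<s}. \<Sum>u<k*n. \<Sum>u'<k*n. X \<sigma> r u * P $$ (u,u') * cnj (X \<sigma> t u'))) v"
      by (rule qf_cong) (auto simp: entry)
    also have "\<dots> = d * (\<Sum>\<sigma><s. qf (k*n) (\<lambda>i j. P $$ (i,j)) (\<lambda>u. \<Sum>t<k*m. cnj (X \<sigma> t u) * v t))"
      by (simp only: qf_lin qf_congruence)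
    finally show "nn (qf (k*m) (\<lambda>r t. A $$ (r,t)) v)"
      using Pp d by (auto simp: psdf_def intro!: nn_mult nn_sum)
  qed
  then show "psd (k*m) (ampl k n m (kr n m s U d) P)"
    using Ac by (simp add: psd_iff A_def)
qed



lemma adj_mult_index:
  assumes "dim_row A = R" "dim_row B = R" "i < dim_col A" "j < dim_col B"
  shows "(adj A * B) $$ (i,j) = (\<Sum>r<R. cnj (A $$ (r,i)) * B $$ (r,j))"
  using assms by (simp add: adj_def scalar_prod_def atLeast0LessThan)

lemma adj_dims[simp]: "dim_row (adj A) = dim_col A" "dim_col (adj A) = dim_row A"
  by (simp_all add: adj_def)

lemma kr_trace:
  assumes U: "U \<in> carrier_mat (m*s) n" and r: "\<rho> \<in> carrier_mat n n"
  shows "mtrace (kr n m s U d \<rho>) = d * (\<Sum>x<n. \<Sum>x'<n. \<rho> $$ (x,x') * (adj U * U) $$ (x,x'))"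
proof -
  have "mtrace (kr n m s U d \<rho>) = (\<Sum>a<m. d * (\<Sum>\<sigma><s. \<Sum>x<n. \<Sum>x'<n.
      \<rho> $$ (x,x') * cnj (U $$ (a*s+\<sigma>, x)) * U $$ (a*s+\<sigma>, x')))"
    unfolding mtrace_def by (simp add: kr_index)
  also have "\<dots> = d * (\<Sum>x<n. \<Sum>x'<n. \<Sum>a<m. \<Sum>\<sigma><s. \<rho> $$ (x,x') * (cnj (U $$ (a*s+\<sigma>, x)) * U $$ (a*s+\<sigma>, x')))"
    by (simp only: sum_distrib_left[symmetric] sum.swap[where A="{..<m}" and B="{..<n}"] sum.swap[where A="{..<s}" and B="{..<n}"] mult.assoc)
  also have "\<dots> = d * (\<Sum>x<n. \<Sum>x'<n. \<rho> $$ (x,x') * (adj U * U) $$ (x,x'))"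
  proof -
    have "(\<Sum>a<m. \<Sum>\<sigma><s. \<rho> $$ (x,x') * (cnj (U $$ (a*s+\<sigma>, x)) * U $$ (a*s+\<sigma>, x'))) = \<rho> $$ (x,x') * (adj U * U) $$ (x,x')"
      if "x < n" "x' < n" for x x'
    proof -
      have "(adj U * U) $$ (x,x') = (\<Sum>r<m*s. cnj (U $$ (r,x)) * U $$ (r,x'))"
        using U that by (intro adj_mult_index) auto
      also have "\<dots> = (\<Sum>a<m. \<Sum>\<sigma><s. cnj (U $$ (a*s+\<sigma>, x)) * U $$ (a*s+\<sigma>, x'))"
        by (rule sum_split_mult)
      finally show ?thesis by (simp add: sum_distrib_left)
    qed
    then show ?thesis by simp
  qed
  finally show ?thesis .
qed

lemma trace_id_sum:
  assumes r: "\<rho> \<in> carrier_mat n n"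
  shows "(\<Sum>x<n. \<Sum>x'<n. \<rho> $$ (x,x') * (1\<^sub>m n) $$ (x,x')) = mtrace \<rho>"
  using r unfolding mtrace_def by (simp add: sum.delta' if_distrib cong: if_cong)

lemma kr_qchannel:
  assumes U: "U \<in> carrier_mat (m*s) n" and iso: "adj U * U = 1\<^sub>m n"
  shows "qchannel n m (kr n m s U 1)"
  unfolding qchannel_def tp_def
  using kr_cp[of 1] kr_trace[OF U] iso trace_id_sum by (simp add: nn_def)



lemma if01_mult: "(if c then 1 else 0) * (y::complex) = (if c then y else 0)" by simp
lemma if0_mult: "(if c then y else 0) * (z::complex) = (if c then y * z else 0)" by simp
lemma if_conj_zero: "(if A \<and> B then f else (0::complex)) = (if A then (if B then f else 0) else 0)" by simp
lemmas delta_simps = if01_mult if0_mult if_conj_zero sum_if_cond sum.delta sum.delta'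

lemma from_units_eqI:
  assumes "\<And>p p' i j. p < n \<Longrightarrow> p' < n \<Longrightarrow> i < m \<Longrightarrow> j < m \<Longrightarrow> E p p' $$ (i,j) = E' p p' $$ (i,j)"
  shows "from_units n m E = from_units n m E'"
  unfolding from_units_def
  by (rule ext) (auto intro!: eq_matI sum.cong simp: assms)

lemma munit_index[simp]: "x < n \<Longrightarrow> x' < n \<Longrightarrow> munit n p p' $$ (x,x') = (if x = p \<and> x' = p' then 1 else 0)"
  by (simp add: munit_def)

lemma munit_carrier[simp]: "munit n p p' \<in> carrier_mat n n"
  by (simp add: munit_def)

lemma from_units_munit:
  assumes "p < n" "p' < n" "i < m" "j < m"
  shows "from_units n m E (munit n p p') $$ (i,j) = E p p' $$ (i,j)"
proof -
  have "from_units n m E (munit n p p') $$ (i,j) = (\<Sum>x<n. \<Sum>x'<n. (if x = p \<and> x' = p' then 1 else 0) * E x x' $$ (i,j))"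
  proof -
    have "from_units n m E (munit n p p') $$ (i,j) = (\<Sum>x<n. \<Sum>x'<n. munit n p p' $$ (x,x') * E x x' $$ (i,j))"
      using assms by (simp add: from_units_def)
    also have "\<dots> = (\<Sum>x<n. \<Sum>x'<n. (if x = p \<and> x' = p' then 1 else 0) * E x x' $$ (i,j))"
      by (intro sum.cong refl) simp
    finally show ?thesis .
  qed
  also have "\<dots> = (\<Sum>x<n. if x = p then E x p' $$ (i,j) else 0)"
    using assms by (intro sum.cong refl) (simp add: delta_simps)
  also have "\<dots> = E p p' $$ (i,j)" using assms by simp
  finally show ?thesis .
qed

lemma lsum_from_units:
  "lsum n m I (\<lambda>k. from_units n m (E k)) = from_units n m (\<lambda>p p'. mat m m (\<lambda>(i,j). \<Sum>k\<in>I. E k p p' $$ (i,j)))"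
  unfolding lsum_def from_units_def
  by (rule ext) (auto intro!: eq_matI simp: sum_distrib_left sum.swap[of _ I])

lemma kron_index:
  "i < nA*nB \<Longrightarrow> j < nA*nB \<Longrightarrow> kron nA nB M N $$ (i,j) = M $$ (i div nB, j div nB) * N $$ (i mod nB, j mod nB)"
  by (simp add: kron_def)

lemma lsum_ltensor:
  "lsum (nX*nY) (nA*nB) {..<N} (\<lambda>i. ltensor nX nY nA nB (\<Psi> i) (\<Phi> i)) =
   from_units (nX*nY) (nA*nB) (\<lambda>p p'. mat (nA*nB) (nA*nB) (\<lambda>(c,c'). \<Sum>i<N.
      \<Psi> i (munit nX (p div nY) (p' div nY)) $$ (c div nB, c' div nB) *
      \<Phi> i (munit nY (p mod nY) (p' mod nY)) $$ (c mod nB, c' mod nB)))"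
  unfolding ltensor_def lsum_from_units
  by (rule from_units_eqI) (simp add: kron_index)

lemma kr_munit:
  assumes "x < n" "x' < n" "a < m" "a' < m"
  shows "kr n m s U d (munit n x x') $$ (a,a') = d * (\<Sum>\<sigma><s. cnj (U $$ (a*s+\<sigma>, x)) * U $$ (a'*s+\<sigma>, x'))"
proof -
  have "kr n m s U d (munit n x x') $$ (a,a') = d * (\<Sum>\<sigma><s. \<Sum>y<n. \<Sum>y'<n.
      (if y = x \<and> y' = x' then 1 else 0) * cnj (U $$ (a*s+\<sigma>, y)) * U $$ (a'*s+\<sigma>, y'))"
  proof -
    have "kr n m s U d (munit n x x') $$ (a,a') = d * (\<Sum>\<sigma><s. \<Sum>y<n. \<Sum>y'<n.
      munit n x x' $$ (y,y') * cnj (U $$ (a*s+\<sigma>, y)) * U $$ (a'*s+\<sigma>, y'))"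
      using assms by (simp add: kr_index)
    also have "\<dots> = d * (\<Sum>\<sigma><s. \<Sum>y<n. \<Sum>y'<n.
      (if y = x \<and> y' = x' then 1 else 0) * cnj (U $$ (a*s+\<sigma>, y)) * U $$ (a'*s+\<sigma>, y'))"
      by (intro arg_cong[where f="\<lambda>z. d * z"] sum.cong refl) simp
    finally show ?thesis .
  qed
  also have "\<dots> = d * (\<Sum>\<sigma><s. cnj (U $$ (a*s+\<sigma>, x)) * U $$ (a'*s+\<sigma>, x'))"
    using assms by (simp add: delta_simps)
  finally show ?thesis .
qed



definition gmat where "gmat nX nY nA nB n s t U V = snd (snd (lowc_gen nX nY nA nB n s t U V))"

lemma lowc_gen_split:
  "lowc_gen nX nY nA nB n s t U V = (1, (\<Sum>i<n. s i * t i), gmat nX nY nA nB n s t U V)"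
  by (simp add: lowc_gen_def gmat_def Let_def)

lemma gmat_carrier: "gmat nX nY nA nB n s t U V \<in> carrier_mat (nA*nB*(\<Sum>i<n. s i * t i)) (nX*nY)"
  by (simp add: lowc_gen_def gmat_def Let_def)

lemma lt_mult_add: "c < C \<Longrightarrow> k < K \<Longrightarrow> c*K + k < C*(K::nat)"
proof -
  assume a: "c < C" "k < K"
  have "c*K + k < c*K + K" using a by simp
  also have "\<dots> = Suc c * K" by simp
  also have "\<dots> \<le> C * K" using a by (intro mult_le_mono1) simp
  finally show ?thesis .
qed

lemma off_lt: "i < (n::nat) \<Longrightarrow> p < m i \<Longrightarrow> (\<Sum>j<i. m j) + p < (\<Sum>j<n. (m j::nat))"
proof -
  assume a: "i < n" "p < m i"
  have "(\<Sum>j<i. m j) + p < (\<Sum>j<Suc i. m j)" using a by simp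
  also have "\<dots> \<le> (\<Sum>j<n. m j)" using a by (intro sum_mono2) auto
  finally show ?thesis .
qed

lemma gmat_index:
  assumes "c < nA*nB" "k < (\<Sum>i<n. s i * t i)" "z < nX*nY"
  shows "gmat nX nY nA nB n s t U V $$ (c*(\<Sum>i<n. s i * t i)+k, z) =
    (\<Sum>i<n. \<Sum>p<s i * t i. if k = (\<Sum>j<i. s j * t j) + p
       then U i $$ ((c div nB) * s i + p div t i, z div nY) * V i $$ ((c mod nB) * t i + p mod t i, z mod nY) else 0)"
proof -
  have dm: "(c*(\<Sum>i<n. s i * t i)+k) div (\<Sum>i<n. s i * t i) = c" "(c*(\<Sum>i<n. s i * t i)+k) mod (\<Sum>i<n. s i * t i) = k"
    using assms(2) by (rule divmod_simps)+
  show ?thesis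
    using assms lt_mult_add[OF assms(1,2)] by (simp add: lowc_gen_def gmat_def Let_def) (simp only: dm)
qed

lemma gmat_block:
  assumes "c < nA*nB" "z < nX*nY" "i < n" "p < s i * t i"
  shows "gmat nX nY nA nB n s t U V $$ (c*(\<Sum>i<n. s i * t i)+((\<Sum>j<i. s j * t j) + p), z) =
    U i $$ ((c div nB) * s i + p div t i, z div nY) * V i $$ ((c mod nB) * t i + p mod t i, z mod nY)"
  using assms off_lt[of i n p "\<lambda>i. s i * t i"]
  by (simp add: gmat_index block_lookup[where m="\<lambda>i. s i * t i"])

lemma gmat_key:
  assumes c: "c < nA*nB" "c' < nA*nB" and z: "z < nX*nY" "z' < nX*nY"
  shows "(\<Sum>k<(\<Sum>i<n. s i * t i). cnj (gmat nX nY nA nB n s t U V $$ (c*(\<Sum>i<n. s i * t i)+k, z)) *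
            gmat nX nY nA nB n s t U V $$ (c' * (\<Sum>i<n. s i * t i)+k, z')) =
    (\<Sum>i<n. (\<Sum>\<sigma><s i. cnj (U i $$ ((c div nB)*s i+\<sigma>, z div nY)) * U i $$ ((c' div nB)*s i+\<sigma>, z' div nY)) *
            (\<Sum>\<tau><t i. cnj (V i $$ ((c mod nB)*t i+\<tau>, z mod nY)) * V i $$ ((c' mod nB)*t i+\<tau>, z' mod nY)))"
proof -
  have "(\<Sum>k<(\<Sum>i<n. s i * t i). cnj ((gmat nX nY nA nB n s t U V) $$ (c * (\<Sum>i<n. s i * t i)+k, z)) * (gmat nX nY nA nB n s t U V) $$ (c' * (\<Sum>i<n. s i * t i)+k, z')) =
     (\<Sum>i<n. \<Sum>p<s i * t i. cnj ((gmat nX nY nA nB n s t U V) $$ (c * (\<Sum>i<n. s i * t i)+((\<Sum>j<i. s j * t j) + p), z)) * (gmat nX nY nA nB n s t U V) $$ (c' * (\<Sum>i<n. s i * t i)+((\<Sum>j<i. s j * t j) + p), z'))"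
    by (rule sum_blocks)
  also have "\<dots> = (\<Sum>i<n. \<Sum>p<s i * t i.
      cnj (U i $$ ((c div nB) * s i + p div t i, z div nY) * V i $$ ((c mod nB) * t i + p mod t i, z mod nY)) *
      (U i $$ ((c' div nB) * s i + p div t i, z' div nY) * V i $$ ((c' mod nB) * t i + p mod t i, z' mod nY)))"
    using c z by (intro sum.cong refl) (simp add: gmat_block)
  also have "\<dots> = (\<Sum>i<n. \<Sum>\<sigma><s i. \<Sum>\<tau><t i.
      (cnj (U i $$ ((c div nB)*s i+\<sigma>, z div nY)) * U i $$ ((c' div nB)*s i+\<sigma>, z' div nY)) *
      (cnj (V i $$ ((c mod nB)*t i+\<tau>, z mod nY)) * V i $$ ((c' mod nB)*t i+\<tau>, z' mod nY)))"
  proof (rule sum.cong[OF refl])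
    fix i assume "i \<in> {..<n}"
    show "(\<Sum>p<s i * t i.
      cnj (U i $$ ((c div nB) * s i + p div t i, z div nY) * V i $$ ((c mod nB) * t i + p mod t i, z mod nY)) *
      (U i $$ ((c' div nB) * s i + p div t i, z' div nY) * V i $$ ((c' mod nB) * t i + p mod t i, z' mod nY))) =
      (\<Sum>\<sigma><s i. \<Sum>\<tau><t i.
      (cnj (U i $$ ((c div nB)*s i+\<sigma>, z div nY)) * U i $$ ((c' div nB)*s i+\<sigma>, z' div nY)) *
      (cnj (V i $$ ((c mod nB)*t i+\<tau>, z mod nY)) * V i $$ ((c' mod nB)*t i+\<tau>, z' mod nY)))"
      by (subst sum_split_mult) (intro sum.cong refl; simp add: algebra_simps)
  qed
  finally show ?thesis by (simp add: sum_product)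
qed



lemma blk_gen_prod:
  assumes "c < nA*nB" "c' < nA*nB" "z < nX*nY" "z' < nX*nY"
  shows "(adj (blk (1, (\<Sum>i<n. s i * t i), gmat nX nY nA nB n s t U V) c z) *
          blk (1, (\<Sum>i<n. s i * t i), gmat nX nY nA nB n s t U V) c' z') $$ (0,0) =
    (\<Sum>i<n. (\<Sum>\<sigma><s i. cnj (U i $$ ((c div nB)*s i+\<sigma>, z div nY)) * U i $$ ((c' div nB)*s i+\<sigma>, z' div nY)) *
            (\<Sum>\<tau><t i. cnj (V i $$ ((c mod nB)*t i+\<tau>, z mod nY)) * V i $$ ((c' mod nB)*t i+\<tau>, z' mod nY)))"
proof -
  have "(adj (blk (1, (\<Sum>i<n. s i * t i), gmat nX nY nA nB n s t U V) c z) *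
          blk (1, (\<Sum>i<n. s i * t i), gmat nX nY nA nB n s t U V) c' z') $$ (0,0) =
    (\<Sum>k<(\<Sum>i<n. s i * t i). cnj (gmat nX nY nA nB n s t U V $$ (c*(\<Sum>i<n. s i * t i)+k, z)) *
            gmat nX nY nA nB n s t U V $$ (c' * (\<Sum>i<n. s i * t i)+k, z'))"
    by (subst adj_mult_index) auto
  also have "\<dots> = (\<Sum>i<n. (\<Sum>\<sigma><s i. cnj (U i $$ ((c div nB)*s i+\<sigma>, z div nY)) * U i $$ ((c' div nB)*s i+\<sigma>, z' div nY)) *
            (\<Sum>\<tau><t i. cnj (V i $$ ((c mod nB)*t i+\<tau>, z mod nY)) * V i $$ ((c' mod nB)*t i+\<tau>, z' mod nY)))"
    by (rule gmat_key[OF assms])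
  finally show ?thesis .
qed

lemma mtrace_1x1: "D \<in> carrier_mat 1 1 \<Longrightarrow> X \<in> carrier_mat 1 1 \<Longrightarrow> mtrace (D * X) = D $$ (0,0) * X $$ (0,0)"
  by (simp add: mtrace_def scalar_prod_def)

lemma gamma_gen:
  assumes D: "D \<in> carrier_mat 1 1"
  shows "Gamma (nX*nY) (nA*nB) (lowc_gen nX nY nA nB n s t U V) D =
    from_units (nX*nY) (nA*nB) (\<lambda>z z'. mat (nA*nB) (nA*nB) (\<lambda>(c,c'). D $$ (0,0) *
      (\<Sum>i<n. (\<Sum>\<sigma><s i. cnj (U i $$ ((c div nB)*s i+\<sigma>, z div nY)) * U i $$ ((c' div nB)*s i+\<sigma>, z' div nY)) *
            (\<Sum>\<tau><t i. cnj (V i $$ ((c mod nB)*t i+\<tau>, z mod nY)) * V i $$ ((c' mod nB)*t i+\<tau>, z' mod nY)))))"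
  unfolding lowc_gen_split Gamma.simps
proof (rule from_units_eqI)
  fix p p' i j assume a: "p < nX*nY" "p' < nX*nY" "i < nA*nB" "j < nA*nB"
  have X: "adj (blk (1, (\<Sum>i<n. s i * t i), gmat nX nY nA nB n s t U V) i p) *
          blk (1, (\<Sum>i<n. s i * t i), gmat nX nY nA nB n s t U V) j p' \<in> carrier_mat 1 1"
    by (rule carrier_matI) simp_all
  show "mat (nA * nB) (nA * nB) (\<lambda>(c, c'). mtrace (D * (adj (blk (1, (\<Sum>i<n. s i * t i), gmat nX nY nA nB n s t U V) c p) *
          blk (1, (\<Sum>i<n. s i * t i), gmat nX nY nA nB n s t U V) c' p'))) $$ (i, j) =
    mat (nA*nB) (nA*nB) (\<lambda>(c,c'). D $$ (0,0) *
      (\<Sum>i<n. (\<Sum>\<sigma><s i. cnj (U i $$ ((c div nB)*s i+\<sigma>, p div nY)) * U i $$ ((c' div nB)*s i+\<sigma>, p' div nY)) *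
            (\<Sum>\<tau><t i. cnj (V i $$ ((c mod nB)*t i+\<tau>, p mod nY)) * V i $$ ((c' mod nB)*t i+\<tau>, p' mod nY)))) $$ (i,j)"
    using a mtrace_1x1[OF D X] blk_gen_prod[OF a(3,4,1,2), where n=n and s=s and t=t and U=U and V=V] by simp
qed

lemma sum_sum_prod_swap:
  "(\<Sum>a\<in>A. \<Sum>b\<in>B. \<Sum>i\<in>I. f i a * (g i b :: complex)) = (\<Sum>i\<in>I. (\<Sum>a\<in>A. f i a) * (\<Sum>b\<in>B. g i b))"
  by (simp only: sum_product sum.swap[where A=B and B=I] sum.swap[where A=A and B=I])

lemma gen_iso:
  assumes U: "\<forall>i<n. U i \<in> carrier_mat (nA * s i) nX"
    and V: "\<forall>i<n. V i \<in> carrier_mat (nB * t i) nY"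
    and Vi: "\<forall>i<n. adj (V i) * V i = 1\<^sub>m nY"
    and Ui: "mat nX nX (\<lambda>(x,x'). \<Sum>i<n. (adj (U i) * U i) $$ (x,x')) = 1\<^sub>m nX"
  shows "is_boi (nX*nY) (nA*nB) (lowc_gen nX nY nA nB n s t U V)"
proof -
  let ?G = "gmat nX nY nA nB n s t U V"
  let ?kd = "\<Sum>i<n. s i * t i"
  have Gc: "?G \<in> carrier_mat (nA*nB*?kd) (nX*nY)" by (rule gmat_carrier)
  have "adj ?G * ?G = 1\<^sub>m (nX*nY)"
  proof (rule eq_matI)
    fix z z' assume "z < dim_row (1\<^sub>m (nX*nY))" "z' < dim_col (1\<^sub>m (nX*nY))"
    then have z: "z < nX*nY" "z' < nX*nY" by auto
    then have ny: "nY > 0" by (cases nY) auto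
    have xz: "z div nY < nX" "z' div nY < nX" using z by (auto simp: less_mult_imp_div_less)
    have yz: "z mod nY < nY" "z' mod nY < nY" using ny by auto
    have "(adj ?G * ?G) $$ (z,z') = (\<Sum>r<nA*nB*?kd. cnj (?G $$ (r,z)) * ?G $$ (r,z'))"
      using Gc z by (intro adj_mult_index) auto
    also have "\<dots> = (\<Sum>c<nA*nB. \<Sum>k<?kd. cnj (?G $$ (c*?kd+k,z)) * ?G $$ (c*?kd+k,z'))"
      by (rule sum_split_mult)
    also have "\<dots> = (\<Sum>c<nA*nB. \<Sum>i<n. (\<Sum>\<sigma><s i. cnj (U i $$ ((c div nB)*s i+\<sigma>, z div nY)) * U i $$ ((c div nB)*s i+\<sigma>, z' div nY)) *
            (\<Sum>\<tau><t i. cnj (V i $$ ((c mod nB)*t i+\<tau>, z mod nY)) * V i $$ ((c mod nB)*t i+\<tau>, z' mod nY)))"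
      using z by (intro sum.cong refl gmat_key) auto
    also have "\<dots> = (\<Sum>a<nA. \<Sum>b<nB. \<Sum>i<n. (\<Sum>\<sigma><s i. cnj (U i $$ (a*s i+\<sigma>, z div nY)) * U i $$ (a*s i+\<sigma>, z' div nY)) *
            (\<Sum>\<tau><t i. cnj (V i $$ (b*t i+\<tau>, z mod nY)) * V i $$ (b*t i+\<tau>, z' mod nY)))"
      by (subst sum_split_mult) (intro sum.cong refl; simp)
    also have "\<dots> = (\<Sum>i<n. (\<Sum>a<nA. \<Sum>\<sigma><s i. cnj (U i $$ (a*s i+\<sigma>, z div nY)) * U i $$ (a*s i+\<sigma>, z' div nY)) *
            (\<Sum>b<nB. \<Sum>\<tau><t i. cnj (V i $$ (b*t i+\<tau>, z mod nY)) * V i $$ (b*t i+\<tau>, z' mod nY)))"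
      by (rule sum_sum_prod_swap)
    also have "\<dots> = (\<Sum>i<n. (adj (U i) * U i) $$ (z div nY, z' div nY) * (adj (V i) * V i) $$ (z mod nY, z' mod nY))"
    proof (rule sum.cong[OF refl])
      fix i assume "i \<in> {..<n}"
      then have i: "i < n" by simp
      have "(adj (U i) * U i) $$ (z div nY, z' div nY) = (\<Sum>r<nA * s i. cnj (U i $$ (r, z div nY)) * U i $$ (r, z' div nY))"
        using U i xz by (intro adj_mult_index) auto
      also have "\<dots> = (\<Sum>a<nA. \<Sum>\<sigma><s i. cnj (U i $$ (a*s i+\<sigma>, z div nY)) * U i $$ (a*s i+\<sigma>, z' div nY))"
        by (rule sum_split_mult)
      finally have 1: "(adj (U i) * U i) $$ (z div nY, z' div nY) = \<dots>" .
      have "(adj (V i) * V i) $$ (z mod nY, z' mod nY) = (\<Sum>r<nB * t i. cnj (V i $$ (r, z mod nY)) * V i $$ (r, z' mod nY))"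
        using V i yz by (intro adj_mult_index) auto
      also have "\<dots> = (\<Sum>b<nB. \<Sum>\<tau><t i. cnj (V i $$ (b*t i+\<tau>, z mod nY)) * V i $$ (b*t i+\<tau>, z' mod nY))"
        by (rule sum_split_mult)
      finally have 2: "(adj (V i) * V i) $$ (z mod nY, z' mod nY) = \<dots>" .
      show "(\<Sum>a<nA. \<Sum>\<sigma><s i. cnj (U i $$ (a*s i+\<sigma>, z div nY)) * U i $$ (a*s i+\<sigma>, z' div nY)) *
            (\<Sum>b<nB. \<Sum>\<tau><t i. cnj (V i $$ (b*t i+\<tau>, z mod nY)) * V i $$ (b*t i+\<tau>, z' mod nY)) =
            (adj (U i) * U i) $$ (z div nY, z' div nY) * (adj (V i) * V i) $$ (z mod nY, z' mod nY)"
        using 1 2 by simp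
    qed
    also have "\<dots> = (\<Sum>i<n. (adj (U i) * U i) $$ (z div nY, z' div nY)) * (if z mod nY = z' mod nY then 1 else 0)"
      using Vi yz by (simp add: sum_distrib_right)
    also have "\<dots> = (if z div nY = z' div nY then 1 else 0) * (if z mod nY = z' mod nY then 1 else 0)"
    proof -
      have "mat nX nX (\<lambda>(x,x'). \<Sum>i<n. (adj (U i) * U i) $$ (x,x')) $$ (z div nY, z' div nY) = 1\<^sub>m nX $$ (z div nY, z' div nY)"
        using Ui by simp
      then show ?thesis using xz by simp
    qed
    also have "\<dots> = 1\<^sub>m (nX*nY) $$ (z,z')"
    proof -
      have "z = z' \<longleftrightarrow> z div nY = z' div nY \<and> z mod nY = z' mod nY"
        by (metis div_mult_mod_eq)
      then show ?thesis using z by auto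
    qed
    finally show "(adj ?G * ?G) $$ (z,z') = 1\<^sub>m (nX*nY) $$ (z,z')" .
  qed (use Gc in auto)
  moreover have "dim_col ?G = nX*nY" using Gc by auto
  ultimately show ?thesis using Gc by (simp add: lowc_gen_split)
qed



lemma blk_bd_index:
  assumes "c < nC" "z < nZ" "k < l1+l2" "j < h1+h2"
  shows "blk (bdsum nZ nC (h1,l1,M1) (h2,l2,M2)) c z $$ (k,j) =
    (if k < l1 \<and> j < h1 then M1 $$ (c*l1+k, z*h1+j)
     else if l1 \<le> k \<and> h1 \<le> j then M2 $$ (c*l2+(k-l1), z*h2+(j-h1)) else 0)"
proof -
  have r: "c*(l1+l2)+k < nC*(l1+l2)" "z*(h1+h2)+j < nZ*(h1+h2)"
    using assms by (auto intro: lt_mult_add)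
  have dm: "(c*(l1+l2)+k) div (l1+l2) = c" "(c*(l1+l2)+k) mod (l1+l2) = k"
           "(z*(h1+h2)+j) div (h1+h2) = z" "(z*(h1+h2)+j) mod (h1+h2) = j"
    using assms by simp_all
  show ?thesis using assms r by (simp add: Let_def) (auto simp: dm add_diff_assoc)
qed

lemma blk_index: "k < l \<Longrightarrow> j < h \<Longrightarrow> blk (h,l,M) c z $$ (k,j) = M $$ (c*l+k, z*h+j)"
  by simp

lemma blk_bd_dims[simp]:
  "dim_row (blk (bdsum nZ nC (h1,l1,M1) (h2,l2,M2)) c z) = l1+l2"
  "dim_col (blk (bdsum nZ nC (h1,l1,M1) (h2,l2,M2)) c z) = h1+h2"
  by simp_all

lemma blk_prod_bd:
  assumes "c < nC" "c' < nC" "z < nZ" "z' < nZ" "j < h1+h2" "i < h1+h2"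
  shows "(adj (blk (bdsum nZ nC (h1,l1,M1) (h2,l2,M2)) c z) * blk (bdsum nZ nC (h1,l1,M1) (h2,l2,M2)) c' z') $$ (j,i) =
    (if j < h1 \<and> i < h1 then (adj (blk (h1,l1,M1) c z) * blk (h1,l1,M1) c' z') $$ (j,i)
     else if h1 \<le> j \<and> h1 \<le> i then (adj (blk (h2,l2,M2) c z) * blk (h2,l2,M2) c' z') $$ (j-h1,i-h1) else 0)"
proof -
  let ?B = "blk (bdsum nZ nC (h1,l1,M1) (h2,l2,M2))"
  have "(adj (?B c z) * ?B c' z') $$ (j,i) = (\<Sum>k<l1+l2. cnj (?B c z $$ (k,j)) * ?B c' z' $$ (k,i))"
    using assms by (intro adj_mult_index) auto
  also have "\<dots> = (\<Sum>k<l1. cnj (?B c z $$ (k,j)) * ?B c' z' $$ (k,i)) + (\<Sum>k<l2. cnj (?B c z $$ (l1+k,j)) * ?B c' z' $$ (l1+k,i))"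
    by (rule sum_lessThan_add)
  also have "\<dots> = (if j < h1 \<and> i < h1 then (adj (blk (h1,l1,M1) c z) * blk (h1,l1,M1) c' z') $$ (j,i)
     else if h1 \<le> j \<and> h1 \<le> i then (adj (blk (h2,l2,M2) c z) * blk (h2,l2,M2) c' z') $$ (j-h1,i-h1) else 0)"
  proof (cases "j < h1 \<and> i < h1")
    case True
    have "(adj (blk (h1,l1,M1) c z) * blk (h1,l1,M1) c' z') $$ (j,i) =
        (\<Sum>k<l1. cnj (blk (h1,l1,M1) c z $$ (k,j)) * blk (h1,l1,M1) c' z' $$ (k,i))"
      using True by (intro adj_mult_index) auto
    then show ?thesis using True assms by (simp add: blk_bd_index blk_index del: blk.simps bdsum.simps)
  next
    case F1: False
    show ?thesis
    proof (cases "h1 \<le> j \<and> h1 \<le> i")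
      case True
      have "(adj (blk (h2,l2,M2) c z) * blk (h2,l2,M2) c' z') $$ (j-h1,i-h1) =
          (\<Sum>k<l2. cnj (blk (h2,l2,M2) c z $$ (k,j-h1)) * blk (h2,l2,M2) c' z' $$ (k,i-h1))"
        using True assms by (intro adj_mult_index) auto
      moreover have "j - h1 < h2" "i - h1 < h2" using True assms by auto
      ultimately show ?thesis using True assms by (simp add: blk_bd_index blk_index add_diff_assoc del: blk.simps bdsum.simps)
    next
      case False
      then show ?thesis using F1 assms by (auto simp: blk_bd_index simp del: blk.simps bdsum.simps)
    qed
  qed
  finally show ?thesis .
qed


definition bprod :: "boi \<Rightarrow> nat \<Rightarrow> nat \<Rightarrow> nat \<Rightarrow> nat \<Rightarrow> complex mat" where
  "bprod W c z c' z' = adj (blk W c z) * blk W c' z'"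

lemma bprod_bd:
  assumes "c < nC" "c' < nC" "z < nZ" "z' < nZ" "j < h1+h2" "i < h1+h2"
  shows "bprod (bdsum nZ nC (h1,l1,M1) (h2,l2,M2)) c z c' z' $$ (j,i) =
    (if j < h1 \<and> i < h1 then bprod (h1,l1,M1) c z c' z' $$ (j,i)
     else if h1 \<le> j \<and> h1 \<le> i then bprod (h2,l2,M2) c z c' z' $$ (j-h1,i-h1) else 0)"
  unfolding bprod_def by (rule blk_prod_bd[OF assms])

lemma boi_entry:
  assumes M: "M \<in> carrier_mat (nC*l) (nZ*h)" and a: "z < nZ" "z' < nZ" "j < h" "j' < h"
  shows "(adj M * M) $$ (z*h+j, z'*h+j') = (\<Sum>c<nC. (bprod (h,l,M) c z c z') $$ (j,j'))"
proof -
  have "(adj M * M) $$ (z*h+j, z'*h+j') = (\<Sum>r<nC*l. cnj (M $$ (r, z*h+j)) * M $$ (r, z'*h+j'))"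
    using M a lt_mult_add[of z nZ j h] lt_mult_add[of z' nZ j' h] by (intro adj_mult_index) auto
  also have "\<dots> = (\<Sum>c<nC. \<Sum>k<l. cnj (M $$ (c*l+k, z*h+j)) * M $$ (c*l+k, z'*h+j'))"
    by (rule sum_split_mult)
  also have "\<dots> = (\<Sum>c<nC. (bprod (h,l,M) c z c z') $$ (j,j'))"
  proof (rule sum.cong[OF refl])
    fix c assume "c \<in> {..<nC}"
    have "(bprod (h,l,M) c z c z') $$ (j,j') = (\<Sum>k<l. cnj (blk (h,l,M) c z $$ (k,j)) * blk (h,l,M) c z' $$ (k,j'))"
      using a unfolding bprod_def by (intro adj_mult_index) auto
    then show "(\<Sum>k<l. cnj (M $$ (c*l+k, z*h+j)) * M $$ (c*l+k, z'*h+j')) = (bprod (h,l,M) c z c z') $$ (j,j')"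
      using a by (simp add: blk_index del: blk.simps)
  qed
  finally show ?thesis .
qed

lemma eq_mult_add_iff: "j < h \<Longrightarrow> j' < h \<Longrightarrow> (z*h+j = z'*h+j') \<longleftrightarrow> (z = z' \<and> j = (j'::nat))"
  by (metis divmod_simps)

lemma is_boi_iff:
  "is_boi nZ nC (h,l,M) \<longleftrightarrow> M \<in> carrier_mat (nC*l) (nZ*h) \<and>
     (\<forall>z<nZ. \<forall>z'<nZ. \<forall>j<h. \<forall>j'<h. (\<Sum>c<nC. (bprod (h,l,M) c z c z') $$ (j,j')) = (if z = z' \<and> j = j' then 1 else 0))"
proof
  assume b: "is_boi nZ nC (h,l,M)"
  then have M: "M \<in> carrier_mat (nC*l) (nZ*h)" and I: "adj M * M = 1\<^sub>m (nZ*h)" by auto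
  show "M \<in> carrier_mat (nC*l) (nZ*h) \<and>
     (\<forall>z<nZ. \<forall>z'<nZ. \<forall>j<h. \<forall>j'<h. (\<Sum>c<nC. (bprod (h,l,M) c z c z') $$ (j,j')) = (if z = z' \<and> j = j' then 1 else 0))"
  proof (intro conjI M allI impI)
    fix z z' j j' assume a: "z < nZ" "z' < nZ" "j < h" "j' < h"
    have "(\<Sum>c<nC. (bprod (h,l,M) c z c z') $$ (j,j')) = (adj M * M) $$ (z*h+j, z'*h+j')"
      using boi_entry[OF M a] by simp
    also have "\<dots> = (if z = z' \<and> j = j' then 1 else 0)"
      using I a lt_mult_add[of z nZ j h] lt_mult_add[of z' nZ j' h] eq_mult_add_iff[OF a(3,4)] by simp
    finally show "(\<Sum>c<nC. (bprod (h,l,M) c z c z') $$ (j,j')) = (if z = z' \<and> j = j' then 1 else 0)" .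
  qed
next
  assume a: "M \<in> carrier_mat (nC*l) (nZ*h) \<and>
     (\<forall>z<nZ. \<forall>z'<nZ. \<forall>j<h. \<forall>j'<h. (\<Sum>c<nC. (bprod (h,l,M) c z c z') $$ (j,j')) = (if z = z' \<and> j = j' then 1 else 0))"
  then have M: "M \<in> carrier_mat (nC*l) (nZ*h)" by simp
  have "adj M * M = 1\<^sub>m (nZ*h)"
  proof (rule eq_matI)
    fix r s assume rs: "r < dim_row (1\<^sub>m (nZ*h))" "s < dim_col (1\<^sub>m (nZ*h))"
    then have rs': "r < nZ*h" "s < nZ*h" by auto
    then have h0: "h > 0" by (cases h) auto
    have d: "r div h < nZ" "s div h < nZ" "r mod h < h" "s mod h < h"
      using rs' h0 by (auto simp: less_mult_imp_div_less)
    have r: "r = (r div h)*h + r mod h" "s = (s div h)*h + s mod h" by simp_all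
    have "(adj M * M) $$ ((r div h)*h + r mod h, (s div h)*h + s mod h) =
      (if r div h = s div h \<and> r mod h = s mod h then 1 else 0)"
    proof -
      have "(\<Sum>c<nC. (bprod (h,l,M) c (r div h) c (s div h)) $$ (r mod h, s mod h)) = (if r div h = s div h \<and> r mod h = s mod h then 1 else 0)"
        using a d by blast
      then show ?thesis using boi_entry[OF M d] by simp
    qed
    moreover have "(r div h = s div h \<and> r mod h = s mod h) \<longleftrightarrow> r = s"
      by (metis div_mult_mod_eq)
    ultimately show "(adj M * M) $$ (r,s) = 1\<^sub>m (nZ*h) $$ (r,s)" using r rs' by simp
  qed (use M in auto)
  then show "is_boi nZ nC (h,l,M)" using M by simp
qed

lemma bd_is_boi:
  assumes b1: "is_boi nZ nC (h1,l1,M1)" and b2: "is_boi nZ nC (h2,l2,M2)"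
  shows "is_boi nZ nC (bdsum nZ nC (h1,l1,M1) (h2,l2,M2))"
proof -
  define B where "B = bdsum nZ nC (h1,l1,M1) (h2,l2,M2)"
  define MB where "MB = snd (snd B)"
  have Beq: "B = (h1+h2, l1+l2, MB)" by (simp add: B_def MB_def)
  have MBc: "MB \<in> carrier_mat (nC*(l1+l2)) (nZ*(h1+h2))" by (simp add: MB_def B_def)
  have c1: "\<forall>z<nZ. \<forall>z'<nZ. \<forall>j<h1. \<forall>j'<h1. (\<Sum>c<nC. (bprod (h1,l1,M1) c z c z') $$ (j,j')) = (if z = z' \<and> j = j' then 1 else 0)"
    using b1 unfolding is_boi_iff by blast
  have c2: "\<forall>z<nZ. \<forall>z'<nZ. \<forall>j<h2. \<forall>j'<h2. (\<Sum>c<nC. (bprod (h2,l2,M2) c z c z') $$ (j,j')) = (if z = z' \<and> j = j' then 1 else 0)"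
    using b2 unfolding is_boi_iff by blast
  have "is_boi nZ nC (h1+h2, l1+l2, MB)"
    unfolding is_boi_iff
  proof (intro conjI MBc allI impI)
    fix z z' j j' assume a: "z < nZ" "z' < nZ" "j < h1+h2" "j' < h1+h2"
    have "(\<Sum>c<nC. (bprod (h1+h2, l1+l2, MB) c z c z') $$ (j,j')) =
       (\<Sum>c<nC. (if j < h1 \<and> j' < h1 then (bprod (h1,l1,M1) c z c z') $$ (j,j')
     else if h1 \<le> j \<and> h1 \<le> j' then (bprod (h2,l2,M2) c z c z') $$ (j-h1,j'-h1) else 0))"
      using a unfolding Beq[symmetric] B_def by (intro sum.cong refl bprod_bd) auto
    also have "\<dots> = (if z = z' \<and> j = j' then 1 else 0)"
    proof (cases "j < h1 \<and> j' < h1")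
      case True
      then show ?thesis using c1 a by simp
    next
      case F: False
      show ?thesis
      proof (cases "h1 \<le> j \<and> h1 \<le> j'")
        case True
        then have "j - h1 < h2" "j' - h1 < h2" "(j - h1 = j' - h1) = (j = j')" using a by auto
        then show ?thesis using c2 a True F by simp
      next
        case False
        then have "j \<noteq> j'" using F by auto
        then show ?thesis by (subst if_not_P[OF F], subst if_not_P[OF False]) simp
      qed
    qed
    finally show "(\<Sum>c<nC. (bprod (h1+h2, l1+l2, MB) c z c z') $$ (j,j')) = (if z = z' \<and> j = j' then 1 else 0)" .
  qed
  then show ?thesis using Beq B_def by simp
qed



lemma mtrace_mult:
  assumes "A \<in> carrier_mat n n" "X \<in> carrier_mat n n"
  shows "mtrace (A * X) = (\<Sum>i<n. \<Sum>j<n. A $$ (i,j) * X $$ (j,i))"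
  using assms by (simp add: mtrace_def scalar_prod_def atLeast0LessThan)

lemma bprod_carrier: "bprod (h,l,M) c z c' z' \<in> carrier_mat h h"
  by (rule carrier_matI) (simp_all add: bprod_def)

lemma gamma_entry:
  assumes "p < nZ" "p' < nZ" "c < nC" "c' < nC"
  shows "Gamma nZ nC (h,l,M) D (munit nZ p p') $$ (c,c') = mtrace (D * bprod (h,l,M) c p c' p')"
  using assms by (simp add: from_units_munit bprod_def del: blk.simps)

definition dblk1 :: "nat \<Rightarrow> complex mat \<Rightarrow> complex mat" where
  "dblk1 h1 D = mat h1 h1 (\<lambda>(i,j). D $$ (i,j))"
definition dblk2 :: "nat \<Rightarrow> nat \<Rightarrow> complex mat \<Rightarrow> complex mat" where
  "dblk2 h1 h2 D = mat h2 h2 (\<lambda>(i,j). D $$ (h1+i,h1+j))"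

lemma mtrace_bd:
  assumes D: "D \<in> carrier_mat (h1+h2) (h1+h2)"
    and a: "c < nC" "c' < nC" "p < nZ" "p' < nZ"
  shows "mtrace (D * bprod (bdsum nZ nC (h1,l1,M1) (h2,l2,M2)) c p c' p') =
    mtrace (dblk1 h1 D * bprod (h1,l1,M1) c p c' p') + mtrace (dblk2 h1 h2 D * bprod (h2,l2,M2) c p c' p')"
proof -
  define B where "B = bdsum nZ nC (h1,l1,M1) (h2,l2,M2)"
  have Beq: "B = (h1+h2, l1+l2, snd (snd B))" by (simp add: B_def)
  have Xc: "bprod B c p c' p' \<in> carrier_mat (h1+h2) (h1+h2)"
    by (subst Beq) (rule bprod_carrier)
  have "mtrace (D * bprod B c p c' p') = (\<Sum>i<h1+h2. \<Sum>j<h1+h2. D $$ (i,j) * bprod B c p c' p' $$ (j,i))"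
    by (rule mtrace_mult[OF D Xc])
  also have "\<dots> = (\<Sum>i<h1. \<Sum>j<h1. D $$ (i,j) * bprod (h1,l1,M1) c p c' p' $$ (j,i)) +
      (\<Sum>i<h2. \<Sum>j<h2. D $$ (h1+i,h1+j) * bprod (h2,l2,M2) c p c' p' $$ (j,i))"
    unfolding B_def using a by (simp add: sum_lessThan_add bprod_bd del: bdsum.simps)
  also have "\<dots> = mtrace (dblk1 h1 D * bprod (h1,l1,M1) c p c' p') + mtrace (dblk2 h1 h2 D * bprod (h2,l2,M2) c p c' p')"
  proof -
    have "mtrace (dblk1 h1 D * bprod (h1,l1,M1) c p c' p') = (\<Sum>i<h1. \<Sum>j<h1. dblk1 h1 D $$ (i,j) * bprod (h1,l1,M1) c p c' p' $$ (j,i))"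
      by (rule mtrace_mult) (simp_all add: dblk1_def bprod_carrier)
    moreover have "mtrace (dblk2 h1 h2 D * bprod (h2,l2,M2) c p c' p') = (\<Sum>i<h2. \<Sum>j<h2. dblk2 h1 h2 D $$ (i,j) * bprod (h2,l2,M2) c p c' p' $$ (j,i))"
      by (rule mtrace_mult) (simp_all add: dblk2_def bprod_carrier)
    ultimately show ?thesis by (simp add: dblk1_def dblk2_def)
  qed
  finally show ?thesis unfolding B_def .
qed

lemma mtrace_blocks:
  assumes D: "D \<in> carrier_mat (h1+h2) (h1+h2)"
  shows "mtrace D = mtrace (dblk1 h1 D) + mtrace (dblk2 h1 h2 D)"
  using D by (simp add: mtrace_def dblk1_def dblk2_def sum_lessThan_add)

lemma psd_blocks:
  assumes P: "psd (h1+h2) D"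
  shows "psd h1 (dblk1 h1 D)" "psd h2 (dblk2 h1 h2 D)"
proof -
  have Dc: "D \<in> carrier_mat (h1+h2) (h1+h2)" and Dp: "psdf (h1+h2) (\<lambda>i j. D $$ (i,j))"
    using P by (auto simp: psd_iff)
  have "nn (qf h1 (\<lambda>i j. dblk1 h1 D $$ (i,j)) v)" for v
  proof -
    define u where "u k = (if k < h1 then v k else 0)" for k
    have "qf (h1+h2) (\<lambda>i j. D $$ (i,j)) u = (\<Sum>i\<in>{..<h1}. \<Sum>j\<in>{..<h1}. cnj (u i) * D $$ (i,j) * u j)"
      by (rule qf_support) (auto simp: u_def)
    also have "\<dots> = qf h1 (\<lambda>i j. dblk1 h1 D $$ (i,j)) v"
      unfolding qf_def by (intro sum.cong refl) (simp add: u_def dblk1_def)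
    finally show ?thesis using Dp unfolding psdf_def by metis
  qed
  then show "psd h1 (dblk1 h1 D)" by (simp add: psd_iff psdf_def dblk1_def)
  have "nn (qf h2 (\<lambda>i j. dblk2 h1 h2 D $$ (i,j)) v)" for v
  proof -
    define u where "u k = (if h1 \<le> k then v (k - h1) else 0)" for k
    have "qf (h1+h2) (\<lambda>i j. D $$ (i,j)) u = qf h2 (\<lambda>i j. dblk2 h1 h2 D $$ (i,j)) v"
      unfolding qf_def by (simp add: sum_lessThan_add u_def dblk2_def)
    then show ?thesis using Dp unfolding psdf_def by metis
  qed
  then show "psd h2 (dblk2 h1 h2 D)" by (simp add: psd_iff psdf_def dblk2_def)
qed



lemma mod_lt_of_lt_mult: "p < a*(b::nat) \<Longrightarrow> p mod b < b"
  by (cases b) auto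

lemma div_lt_of_lt_mult: "p < a*(b::nat) \<Longrightarrow> p div b < a"
  by (simp add: less_mult_imp_div_less)

lemma sum_mult_pull: "(d::complex) * (\<Sum>i\<in>I. f i * g i) = (\<Sum>i\<in>I. (d * f i) * g i)"
  by (simp add: sum_distrib_left mult.assoc)

lemma R_boi: "W \<in> R_lowc nX nY nA nB \<Longrightarrow> is_boi (nX*nY) (nA*nB) W"
proof (induction rule: R_lowc.induct)
  case (gen n U s V t)
  then show ?case by (intro gen_iso) auto
next
  case (dsum W1 W2)
  obtain h1 l1 M1 where 1: "W1 = (h1,l1,M1)" by (cases W1) auto
  obtain h2 l2 M2 where 2: "W2 = (h2,l2,M2)" by (cases W2) auto
  show ?case using dsum bd_is_boi unfolding 1 2 by blast
qed

lemma mtrace_lsum: "\<rho> \<in> carrier_mat n n \<Longrightarrow> mtrace (lsum n m I \<Psi> \<rho>) = (\<Sum>a<m. \<Sum>k\<in>I. \<Psi> k \<rho> $$ (a,a))"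
  by (simp add: lsum_def mtrace_def)

lemma gamma_bprod: "Gamma nZ nC W D = from_units nZ nC (\<lambda>z z'. mat nC nC (\<lambda>(c,c'). mtrace (D * bprod W c z c' z')))"
  by (cases W) (simp add: bprod_def del: blk.simps)

lemma lsum_ltensor_munit:
  assumes "p < nX*nY" "p' < nX*nY" "c < nA*nB" "c' < nA*nB"
  shows "lsum (nX*nY) (nA*nB) {..<N} (\<lambda>i. ltensor nX nY nA nB (\<Psi> i) (\<Phi> i)) (munit (nX*nY) p p') $$ (c,c') =
    (\<Sum>i<N. \<Psi> i (munit nX (p div nY) (p' div nY)) $$ (c div nB, c' div nB) *
      \<Phi> i (munit nY (p mod nY) (p' mod nY)) $$ (c mod nB, c' mod nB))"
  using assms by (simp add: lsum_ltensor from_units_munit)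

definition Gclaim :: "nat \<Rightarrow> nat \<Rightarrow> nat \<Rightarrow> nat \<Rightarrow> boi \<Rightarrow> complex mat \<Rightarrow> bool" where
  "Gclaim nX nY nA nB W D \<longleftrightarrow> (\<exists>N \<Psi> \<Phi>. (\<forall>i<N. cp nX nA (\<Psi> i)) \<and> (\<forall>i<N. qchannel nY nB (\<Phi> i)) \<and>
     (\<forall>\<rho>\<in>carrier_mat nX nX. mtrace (lsum nX nA {..<N} \<Psi> \<rho>) = mtrace D * mtrace \<rho>) \<and>
     Gamma (nX*nY) (nA*nB) W D = lsum (nX*nY) (nA*nB) {..<N} (\<lambda>i. ltensor nX nY nA nB (\<Psi> i) (\<Phi> i)))"

lemma G_gen:
  assumes U: "\<forall>i<n. U i \<in> carrier_mat (nA * s i) nX"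
    and V: "\<forall>i<n. V i \<in> carrier_mat (nB * t i) nY"
    and Vi: "\<forall>i<n. adj (V i) * V i = 1\<^sub>m nY"
    and Ui: "mat nX nX (\<lambda>(x,x'). \<Sum>i<n. (adj (U i) * U i) $$ (x,x')) = 1\<^sub>m nX"
    and D: "psd 1 D"
  shows "Gclaim nX nY nA nB (lowc_gen nX nY nA nB n s t U V) D"
proof -
  have Dc: "D \<in> carrier_mat 1 1" using D by (simp add: psd_iff)
  define d where "d = D $$ (0,0)"
  have dnn: "nn d" using D psdf_diag[of 1 "\<lambda>i j. D $$ (i,j)" 0] by (simp add: psd_iff d_def)
  have trD: "mtrace D = d" using Dc by (simp add: mtrace_def d_def)
  define \<Psi> where "\<Psi> i = kr nX nA (s i) (U i) d" for i
  define \<Phi> where "\<Phi> i = kr nY nB (t i) (V i) 1" for i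
  have cp: "\<forall>i<n. cp nX nA (\<Psi> i)" using kr_cp[OF dnn] by (simp add: \<Psi>_def)
  have qc: "\<forall>i<n. qchannel nY nB (\<Phi> i)" using kr_qchannel V Vi by (simp add: \<Phi>_def)
  have tr: "mtrace (lsum nX nA {..<n} \<Psi> \<rho>) = mtrace D * mtrace \<rho>" if r: "\<rho> \<in> carrier_mat nX nX" for \<rho>
  proof -
    have "mtrace (lsum nX nA {..<n} \<Psi> \<rho>) = (\<Sum>i<n. mtrace (\<Psi> i \<rho>))"
      by (subst mtrace_lsum[OF r]) (simp add: mtrace_def \<Psi>_def sum.swap[of _ "{..<n}"])
    also have "\<dots> = (\<Sum>i<n. d * (\<Sum>x<nX. \<Sum>x'<nX. \<rho> $$ (x,x') * (adj (U i) * U i) $$ (x,x')))"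
      using U r by (intro sum.cong refl) (simp add: \<Psi>_def kr_trace)
    also have "\<dots> = d * (\<Sum>x<nX. \<Sum>x'<nX. \<rho> $$ (x,x') * (\<Sum>i<n. (adj (U i) * U i) $$ (x,x')))"
      by (simp add: sum_distrib_left sum.swap[of _ "{..<n}"] mult.assoc)
    also have "\<dots> = d * (\<Sum>x<nX. \<Sum>x'<nX. \<rho> $$ (x,x') * 1\<^sub>m nX $$ (x,x'))"
    proof -
      have "(\<Sum>i<n. (adj (U i) * U i) $$ (x,x')) = 1\<^sub>m nX $$ (x,x')" if "x < nX" "x' < nX" for x x'
        using arg_cong[OF Ui, of "\<lambda>M. M $$ (x,x')"] that by simp
      then show ?thesis by simp
    qed
    also have "\<dots> = mtrace D * mtrace \<rho>" using trace_id_sum[OF r] trD by simp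
    finally show ?thesis .
  qed
  have gam: "Gamma (nX*nY) (nA*nB) (lowc_gen nX nY nA nB n s t U V) D =
      lsum (nX*nY) (nA*nB) {..<n} (\<lambda>i. ltensor nX nY nA nB (\<Psi> i) (\<Phi> i))"
    unfolding gamma_gen[OF Dc] lsum_ltensor
  proof (rule from_units_eqI)
    fix p p' c c' assume a: "p < nX*nY" "p' < nX*nY" "c < nA*nB" "c' < nA*nB"
    then have b: "p div nY < nX" "p' div nY < nX" "c div nB < nA" "c' div nB < nA"
      "p mod nY < nY" "p' mod nY < nY" "c mod nB < nB" "c' mod nB < nB"
      by (auto intro: mod_lt_of_lt_mult div_lt_of_lt_mult)
    show "mat (nA*nB) (nA*nB) (\<lambda>(c,c'). D $$ (0,0) *
      (\<Sum>i<n. (\<Sum>\<sigma><s i. cnj (U i $$ ((c div nB)*s i+\<sigma>, p div nY)) * U i $$ ((c' div nB)*s i+\<sigma>, p' div nY)) *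
            (\<Sum>\<tau><t i. cnj (V i $$ ((c mod nB)*t i+\<tau>, p mod nY)) * V i $$ ((c' mod nB)*t i+\<tau>, p' mod nY)))) $$ (c,c') =
      mat (nA*nB) (nA*nB) (\<lambda>(c,c'). \<Sum>i<n.
      \<Psi> i (munit nX (p div nY) (p' div nY)) $$ (c div nB, c' div nB) *
      \<Phi> i (munit nY (p mod nY) (p' mod nY)) $$ (c mod nB, c' mod nB)) $$ (c,c')"
      using a b by (simp add: \<Psi>_def \<Phi>_def kr_munit d_def) (simp add: sum_distrib_left mult_ac, rule sum.cong[OF refl], rule sum.swap)
  qed
  show ?thesis unfolding Gclaim_def using cp qc tr gam by blast
qed



lemma G_dsum:
  assumes IH1: "\<And>D. psd h1 D \<Longrightarrow> Gclaim nX nY nA nB (h1,l1,M1) D"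
    and IH2: "\<And>D. psd h2 D \<Longrightarrow> Gclaim nX nY nA nB (h2,l2,M2) D"
    and D: "psd (h1+h2) D"
  shows "Gclaim nX nY nA nB (bdsum (nX*nY) (nA*nB) (h1,l1,M1) (h2,l2,M2)) D"
proof -
  have Dc: "D \<in> carrier_mat (h1+h2) (h1+h2)" using D by (simp add: psd_iff)
  obtain N1 \<Psi>1 \<Phi>1 where A1: "\<forall>i<N1. cp nX nA (\<Psi>1 i)" "\<forall>i<N1. qchannel nY nB (\<Phi>1 i)"
     "\<forall>\<rho>\<in>carrier_mat nX nX. mtrace (lsum nX nA {..<N1} \<Psi>1 \<rho>) = mtrace (dblk1 h1 D) * mtrace \<rho>"
     "Gamma (nX*nY) (nA*nB) (h1,l1,M1) (dblk1 h1 D) = lsum (nX*nY) (nA*nB) {..<N1} (\<lambda>i. ltensor nX nY nA nB (\<Psi>1 i) (\<Phi>1 i))"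
    using IH1[OF psd_blocks(1)[OF D]] unfolding Gclaim_def by blast
  obtain N2 \<Psi>2 \<Phi>2 where A2: "\<forall>i<N2. cp nX nA (\<Psi>2 i)" "\<forall>i<N2. qchannel nY nB (\<Phi>2 i)"
     "\<forall>\<rho>\<in>carrier_mat nX nX. mtrace (lsum nX nA {..<N2} \<Psi>2 \<rho>) = mtrace (dblk2 h1 h2 D) * mtrace \<rho>"
     "Gamma (nX*nY) (nA*nB) (h2,l2,M2) (dblk2 h1 h2 D) = lsum (nX*nY) (nA*nB) {..<N2} (\<lambda>i. ltensor nX nY nA nB (\<Psi>2 i) (\<Phi>2 i))"
    using IH2[OF psd_blocks(2)[OF D]] unfolding Gclaim_def by blast
  define \<Psi> where "\<Psi> i = (if i < N1 then \<Psi>1 i else \<Psi>2 (i - N1))" for i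
  define \<Phi> where "\<Phi> i = (if i < N1 then \<Phi>1 i else \<Phi>2 (i - N1))" for i
  have cp: "\<forall>i<N1+N2. cp nX nA (\<Psi> i)" using A1(1) A2(1) by (auto simp: \<Psi>_def)
  have qc: "\<forall>i<N1+N2. qchannel nY nB (\<Phi> i)" using A1(2) A2(2) by (auto simp: \<Phi>_def)
  have tr: "mtrace (lsum nX nA {..<N1+N2} \<Psi> \<rho>) = mtrace D * mtrace \<rho>" if r: "\<rho> \<in> carrier_mat nX nX" for \<rho>
  proof -
    have "mtrace (lsum nX nA {..<N1+N2} \<Psi> \<rho>) = mtrace (lsum nX nA {..<N1} \<Psi>1 \<rho>) + mtrace (lsum nX nA {..<N2} \<Psi>2 \<rho>)"
      using r by (simp add: mtrace_lsum sum_lessThan_add sum.distrib \<Psi>_def)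
    also have "\<dots> = (mtrace (dblk1 h1 D) + mtrace (dblk2 h1 h2 D)) * mtrace \<rho>"
      using A1(3) A2(3) r by (simp add: algebra_simps)
    also have "\<dots> = mtrace D * mtrace \<rho>" using mtrace_blocks[OF Dc] by simp
    finally show ?thesis .
  qed
  have gam: "Gamma (nX*nY) (nA*nB) (bdsum (nX*nY) (nA*nB) (h1,l1,M1) (h2,l2,M2)) D =
      lsum (nX*nY) (nA*nB) {..<N1+N2} (\<lambda>i. ltensor nX nY nA nB (\<Psi> i) (\<Phi> i))"
    unfolding gamma_bprod lsum_ltensor
  proof (rule from_units_eqI)
    fix p p' c c' assume a: "p < nX*nY" "p' < nX*nY" "c < nA*nB" "c' < nA*nB"
    have "mtrace (D * bprod (bdsum (nX*nY) (nA*nB) (h1,l1,M1) (h2,l2,M2)) c p c' p') =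
      mtrace (dblk1 h1 D * bprod (h1,l1,M1) c p c' p') + mtrace (dblk2 h1 h2 D * bprod (h2,l2,M2) c p c' p')"
      using a by (intro mtrace_bd Dc)
    also have "\<dots> = Gamma (nX*nY) (nA*nB) (h1,l1,M1) (dblk1 h1 D) (munit (nX*nY) p p') $$ (c,c') +
                    Gamma (nX*nY) (nA*nB) (h2,l2,M2) (dblk2 h1 h2 D) (munit (nX*nY) p p') $$ (c,c')"
      using a by (simp only: gamma_entry)
    also have "\<dots> = (\<Sum>i<N1. \<Psi>1 i (munit nX (p div nY) (p' div nY)) $$ (c div nB, c' div nB) *
      \<Phi>1 i (munit nY (p mod nY) (p' mod nY)) $$ (c mod nB, c' mod nB)) +
       (\<Sum>i<N2. \<Psi>2 i (munit nX (p div nY) (p' div nY)) $$ (c div nB, c' div nB) *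
      \<Phi>2 i (munit nY (p mod nY) (p' mod nY)) $$ (c mod nB, c' mod nB))"
      unfolding A1(4) A2(4) using a by (simp only: lsum_ltensor_munit)
    also have "\<dots> = (\<Sum>i<N1+N2. \<Psi> i (munit nX (p div nY) (p' div nY)) $$ (c div nB, c' div nB) *
      \<Phi> i (munit nY (p mod nY) (p' mod nY)) $$ (c mod nB, c' mod nB))"
      by (simp add: sum_lessThan_add \<Psi>_def \<Phi>_def)
    finally show "mat (nA*nB) (nA*nB) (\<lambda>(c,c'). mtrace (D * bprod (bdsum (nX*nY) (nA*nB) (h1,l1,M1) (h2,l2,M2)) c p c' p')) $$ (c,c') =
      mat (nA*nB) (nA*nB) (\<lambda>(c,c'). \<Sum>i<N1+N2. \<Psi> i (munit nX (p div nY) (p' div nY)) $$ (c div nB, c' div nB) *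
      \<Phi> i (munit nY (p mod nY) (p' mod nY)) $$ (c mod nB, c' mod nB)) $$ (c,c')"
      using a by simp
  qed
  show ?thesis unfolding Gclaim_def using cp qc tr gam by blast
qed

lemma G_all: "W \<in> R_lowc nX nY nA nB \<Longrightarrow> psd (fst W) D \<Longrightarrow> Gclaim nX nY nA nB W D"
proof (induction arbitrary: D rule: R_lowc.induct)
  case (gen n U s V t)
  then show ?case by (intro G_gen) (auto simp: lowc_gen_split)
next
  case (dsum W1 W2)
  obtain h1 l1 M1 where 1: "W1 = (h1,l1,M1)" by (cases W1) auto
  obtain h2 l2 M2 where 2: "W2 = (h2,l2,M2)" by (cases W2) auto
  show ?case using dsum.IH dsum.prems unfolding 1 2 by (intro G_dsum) auto
qed

lemma QC_sub: "QC (nX*nY) (nA*nB) (R_lowc nX nY nA nB) \<subseteq> Q_lowc nX nY nA nB"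
proof
  fix \<Gamma> assume "\<Gamma> \<in> QC (nX*nY) (nA*nB) (R_lowc nX nY nA nB)"
  then obtain W D where W: "W \<in> R_lowc nX nY nA nB" and D: "density (fst W) D" and G: "\<Gamma> = Gamma (nX*nY) (nA*nB) W D"
    unfolding QC_def by blast
  have "Gclaim nX nY nA nB W D" using G_all[OF W] D by (simp add: density_def)
  then obtain N \<Psi> \<Phi> where "(\<forall>i<N. cp nX nA (\<Psi> i))" "(\<forall>i<N. qchannel nY nB (\<Phi> i))"
     "\<forall>\<rho>\<in>carrier_mat nX nX. mtrace (lsum nX nA {..<N} \<Psi> \<rho>) = mtrace D * mtrace \<rho>"
     "Gamma (nX*nY) (nA*nB) W D = lsum (nX*nY) (nA*nB) {..<N} (\<lambda>i. ltensor nX nY nA nB (\<Psi> i) (\<Phi> i))"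
    unfolding Gclaim_def by blast
  moreover have "mtrace D = 1" using D by (simp add: density_def)
  ultimately show "\<Gamma> \<in> Q_lowc nX nY nA nB"
    unfolding Q_lowc_def tp_def G by auto
qed



lemma mult_if0: "(x::complex) * (if c then y else 0) = (if c then x*y else 0)" by simp

definition selm :: "nat \<Rightarrow> nat \<Rightarrow> nat \<Rightarrow> complex mat" where
  "selm nA nX a0 = mat (nA*nX) nX (\<lambda>(r,x). if r = a0*nX + x then 1 else 0)"

lemma selm_carrier: "selm nA nX a0 \<in> carrier_mat (nA*nX) nX"
  by (simp add: selm_def)

lemma selm_iso:
  assumes "a0 < nA"
  shows "adj (selm nA nX a0) * selm nA nX a0 = 1\<^sub>m nX"
proof (rule eq_matI)
  fix x x' assume "x < dim_row (1\<^sub>m nX)" "x' < dim_col (1\<^sub>m nX)"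
  then have xx: "x < nX" "x' < nX" by auto
  have r: "a0*nX + x < nA*nX" "a0*nX + x' < nA*nX" using assms xx by (auto intro: lt_mult_add)
  have "(adj (selm nA nX a0) * selm nA nX a0) $$ (x,x') = (\<Sum>r<nA*nX. cnj (selm nA nX a0 $$ (r,x)) * selm nA nX a0 $$ (r,x'))"
    using xx by (intro adj_mult_index) (auto simp: selm_def)
  also have "\<dots> = (\<Sum>r<nA*nX. if r = a0*nX + x then (if r = a0*nX + x' then 1 else 0) else 0)"
    using xx by (intro sum.cong refl) (auto simp: selm_def)
  also have "\<dots> = (if x = x' then 1 else 0)" using r by simp
  finally show "(adj (selm nA nX a0) * selm nA nX a0) $$ (x,x') = 1\<^sub>m nX $$ (x,x')" using xx by simp
qed (auto simp: selm_def)

lemma selm_index: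
  assumes "a < nA" "x0 < nX" "x < nX"
  shows "selm nA nX a0 $$ (a*nX + x0, x) = (if a = a0 \<and> x0 = x then 1 else 0)"
  using assms lt_mult_add[OF assms(1,2)] eq_mult_add_iff[of x0 nX x a a0]
  by (simp add: selm_def)

definition W0 where "W0 nX nY nA nB c0 = lowc_gen nX nY nA nB (Suc 0) (\<lambda>_. nX) (\<lambda>_. nY)
    (\<lambda>_. selm nA nX (c0 div nB)) (\<lambda>_. selm nB nY (c0 mod nB))"

lemma W0_in:
  assumes "c0 < nA*nB"
  shows "W0 nX nY nA nB c0 \<in> R_lowc nX nY nA nB"
  unfolding W0_def
proof (rule R_lowc.gen)
  have a: "c0 div nB < nA" "c0 mod nB < nB" using assms by (auto intro: mod_lt_of_lt_mult div_lt_of_lt_mult)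
  show "mat nX nX (\<lambda>(x,x'). \<Sum>i<Suc 0. (adj (selm nA nX (c0 div nB)) * selm nA nX (c0 div nB)) $$ (x,x')) = 1\<^sub>m nX"
    using selm_iso[OF a(1), of nX] by (intro eq_matI) auto
  show "\<forall>i<Suc 0. adj (selm nB nY (c0 mod nB)) * selm nB nY (c0 mod nB) = 1\<^sub>m nY"
    using selm_iso[OF a(2)] by simp
qed (auto simp: selm_carrier)

lemma W0_gmat:
  assumes c0: "c0 < nA*nB" and c: "c < nA*nB" and k: "k < nX*nY" and z: "z < nX*nY"
  shows "gmat nX nY nA nB (Suc 0) (\<lambda>_. nX) (\<lambda>_. nY) (\<lambda>_. selm nA nX (c0 div nB)) (\<lambda>_. selm nB nY (c0 mod nB)) $$ (c*(nX*nY) + k, z)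
     = (if c = c0 \<and> z = k then 1 else 0)"
proof -
  have b: "c div nB < nA" "c mod nB < nB" "k div nY < nX" "k mod nY < nY" "z div nY < nX" "z mod nY < nY"
    using c k z by (auto intro: mod_lt_of_lt_mult div_lt_of_lt_mult)
  have "gmat nX nY nA nB (Suc 0) (\<lambda>_. nX) (\<lambda>_. nY) (\<lambda>_. selm nA nX (c0 div nB)) (\<lambda>_. selm nB nY (c0 mod nB)) $$ (c*(\<Sum>i<Suc 0. nX * nY) + k, z)
    = (\<Sum>i<Suc 0. \<Sum>p<nX * nY. if k = (\<Sum>j<i. nX * nY) + p
       then selm nA nX (c0 div nB) $$ ((c div nB) * nX + p div nY, z div nY) * selm nB nY (c0 mod nB) $$ ((c mod nB) * nY + p mod nY, z mod nY) else 0)"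
    by (rule gmat_index) (use c k z in auto)
  also have "\<dots> = selm nA nX (c0 div nB) $$ ((c div nB) * nX + k div nY, z div nY) * selm nB nY (c0 mod nB) $$ ((c mod nB) * nY + k mod nY, z mod nY)"
    using k by simp
  also have "\<dots> = (if c div nB = c0 div nB \<and> k div nY = z div nY then 1 else 0) * (if c mod nB = c0 mod nB \<and> k mod nY = z mod nY then 1 else 0)"
    using b by (simp add: selm_index)
  also have "\<dots> = (if c = c0 \<and> z = k then 1 else 0)"
  proof -
    have "c = c0 \<longleftrightarrow> c div nB = c0 div nB \<and> c mod nB = c0 mod nB" by (metis div_mult_mod_eq)
    moreover have "z = k \<longleftrightarrow> k div nY = z div nY \<and> k mod nY = z mod nY" by (metis div_mult_mod_eq)
    ultimately show ?thesis by auto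
  qed
  finally show ?thesis by simp
qed

lemma separating:
  assumes S: "S \<in> carrier_mat (nX*nY) (nA*nB)" and S0: "S \<noteq> 0\<^sub>m (nX*nY) (nA*nB)"
  shows "\<exists>W\<in>R_lowc nX nY nA nB. phi (nX*nY) (nA*nB) W S \<noteq> 0\<^sub>m (fst (snd W)) (fst W)"
proof -
  obtain z0 c0 where zc: "z0 < nX*nY" "c0 < nA*nB" "S $$ (z0,c0) \<noteq> 0"
    using S S0 by (metis (no_types, lifting) carrier_matD eq_matI index_zero_mat(1) index_zero_mat(2) index_zero_mat(3))
  let ?G = "gmat nX nY nA nB (Suc 0) (\<lambda>_. nX) (\<lambda>_. nY) (\<lambda>_. selm nA nX (c0 div nB)) (\<lambda>_. selm nB nY (c0 mod nB))"
  have Weq: "W0 nX nY nA nB c0 = (1, nX*nY, ?G)" by (simp add: W0_def lowc_gen_split)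
  have "phi (nX*nY) (nA*nB) (1, nX*nY, ?G) S $$ (z0, 0) = (\<Sum>z<nX*nY. \<Sum>c<nA*nB. S $$ (z,c) * ?G $$ (c*(nX*nY) + z0, z))"
    using zc by simp
  also have "\<dots> = (\<Sum>z<nX*nY. \<Sum>c<nA*nB. S $$ (z,c) * (if c = c0 \<and> z = z0 then 1 else 0))"
    using zc by (intro sum.cong refl) (simp add: W0_gmat)
  also have "\<dots> = S $$ (z0,c0)" using zc by (simp add: delta_simps mult_if0)
  finally have "phi (nX*nY) (nA*nB) (W0 nX nY nA nB c0) S \<noteq> 0\<^sub>m (fst (snd (W0 nX nY nA nB c0))) (fst (W0 nX nY nA nB c0))"
    using zc unfolding Weq by (metis index_zero_mat(1) less_one phi.simps index_mat(1) fst_conv snd_conv zero_less_one)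
  then show ?thesis using W0_in[OF zc(2)] by blast
qed



definition krep :: "nat \<Rightarrow> nat \<Rightarrow> lmap \<Rightarrow> nat \<Rightarrow> complex mat \<Rightarrow> bool" where
  "krep n m \<Psi> r U \<longleftrightarrow> U \<in> carrier_mat (m*r) n \<and>
     (\<forall>x<n. \<forall>x'<n. \<forall>a<m. \<forall>a'<m. \<Psi> (munit n x x') $$ (a,a') = (\<Sum>\<sigma><r. cnj (U $$ (a*r+\<sigma>, x)) * U $$ (a'*r+\<sigma>, x')))"

definition maxent :: "nat \<Rightarrow> complex mat" where
  "maxent n = mat (n*n) (n*n) (\<lambda>(u,v). if u div n = u mod n \<and> v div n = v mod n then 1 else 0)"

lemma maxent_psd: "psd (n*n) (maxent n)"
proof -
  let ?e = "\<lambda>u. u div n = u mod n"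
  have "nn (qf (n*n) (\<lambda>i j. maxent n $$ (i,j)) v)" for v
  proof -
    have "qf (n*n) (\<lambda>i j. maxent n $$ (i,j)) v = (\<Sum>u<n*n. \<Sum>w<n*n. (if ?e u then cnj (v u) else 0) * (if ?e w then v w else 0))"
      unfolding qf_def by (intro sum.cong refl) (auto simp: maxent_def)
    also have "\<dots> = (\<Sum>u<n*n. if ?e u then cnj (v u) else 0) * (\<Sum>w<n*n. if ?e w then v w else 0)"
      by (simp add: sum_product)
    also have "(\<Sum>u<n*n. if ?e u then cnj (v u) else 0) = cnj (\<Sum>w<n*n. if ?e w then v w else 0)"
      by (simp add: if_distrib cong: if_cong)
    finally have eq: "qf (n*n) (\<lambda>i j. maxent n $$ (i,j)) v = cnj (\<Sum>w<n*n. if ?e w then v w else 0) * (\<Sum>w<n*n. if ?e w then v w else 0)" .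
    show ?thesis unfolding eq by (rule nn_cnj_mult)
  qed
  then show ?thesis by (simp add: psd_iff psdf_def maxent_def)
qed

lemma cp_lmap: "cp n m \<Psi> \<Longrightarrow> is_lmap n m \<Psi>" by (simp add: cp_def)

lemma choi:
  assumes cp: "cp n m \<Psi>"
  shows "\<exists>r U. krep n m \<Psi> r U"
proof -
  define C where "C r s = \<Psi> (munit n (r div m) (s div m)) $$ (r mod m, s mod m)" for r s
  have amp: "ampl n n m \<Psi> (maxent n) $$ (r,s) = C r s" if "r < n*m" "s < n*m" for r s
  proof -
    have rd: "r div m < n" "s div m < n" using that by (auto intro: div_lt_of_lt_mult)
    have "mat n n (\<lambda>(a,b). maxent n $$ ((r div m)*n + a, (s div m)*n + b)) = munit n (r div m) (s div m)"
    proof (rule eq_matI)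
      fix a b assume ab: "a < dim_row (munit n (r div m) (s div m))" "b < dim_col (munit n (r div m) (s div m))"
      then have ab': "a < n" "b < n" by (auto simp: munit_def)
      have "(r div m)*n + a < n*n" "(s div m)*n + b < n*n" using rd ab' by (auto intro: lt_mult_add)
      then show "mat n n (\<lambda>(a,b). maxent n $$ ((r div m)*n + a, (s div m)*n + b)) $$ (a,b) = munit n (r div m) (s div m) $$ (a,b)"
        using ab' by (auto simp: maxent_def)
    qed (auto simp: munit_def)
    then show ?thesis using that by (simp add: ampl_def C_def)
  qed
  have "psd (n*m) (ampl n n m \<Psi> (maxent n))" using cp maxent_psd unfolding cp_def by blast
  then have "psdf (n*m) (\<lambda>i j. ampl n n m \<Psi> (maxent n) $$ (i,j))" by (simp add: psd_iff)
  then have "psdf (n*m) C" unfolding psdf_def using qf_cong[of "n*m" "\<lambda>i j. ampl n n m \<Psi> (maxent n) $$ (i,j)" C] amp by metis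
  then obtain r M where M: "\<forall>i<n*m. \<forall>j<n*m. C i j = (\<Sum>\<sigma><(r::nat). M i \<sigma> * cnj (M j \<sigma>))"
    using gram by blast
  define U where "U = mat (m*r) n (\<lambda>(row,x). cnj (M (x*m + row div r) (row mod r)))"
  have "krep n m \<Psi> r U"
    unfolding krep_def
  proof (intro conjI allI impI)
    show "U \<in> carrier_mat (m*r) n" by (simp add: U_def)
    fix x x' a a' assume a: "x < n" "x' < n" "a < m" "a' < m"
    have i: "x*m + a < n*m" "x'*m + a' < n*m" using a by (auto intro: lt_mult_add)
    have "(\<Sum>\<sigma><r. cnj (U $$ (a*r+\<sigma>, x)) * U $$ (a'*r+\<sigma>, x')) = (\<Sum>\<sigma><r. M (x*m+a) \<sigma> * cnj (M (x'*m+a') \<sigma>))"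
      using a by (intro sum.cong refl) (simp add: U_def lt_mult_add)
    also have "\<dots> = C (x*m+a) (x'*m+a')" using M i by simp
    also have "\<dots> = \<Psi> (munit n x x') $$ (a,a')" using a by (simp add: C_def)
    finally show "\<Psi> (munit n x x') $$ (a,a') = (\<Sum>\<sigma><r. cnj (U $$ (a*r+\<sigma>, x)) * U $$ (a'*r+\<sigma>, x'))" by simp
  qed
  then show ?thesis by blast
qed

lemma mtrace_munit: "y < n \<Longrightarrow> y' < n \<Longrightarrow> mtrace (munit n y y') = (if y = y' then 1 else 0)"
  by (simp add: mtrace_def munit_def delta_simps)



lemma Q_sub: "Q_lowc nX nY nA nB \<subseteq> QC (nX*nY) (nA*nB) (R_lowc nX nY nA nB)"
proof
  fix \<Gamma> assume "\<Gamma> \<in> Q_lowc nX nY nA nB"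
  then obtain N \<Psi> \<Phi> where G: "\<Gamma> = lsum (nX*nY) (nA*nB) {..<N} (\<lambda>i. ltensor nX nY nA nB (\<Psi> i) (\<Phi> i))"
    and cpP: "\<forall>i<N. cp nX nA (\<Psi> i)" and tpP: "tp nX (lsum nX nA {..<N} \<Psi>)"
    and qcF: "\<forall>i<N. qchannel nY nB (\<Phi> i)"
    unfolding Q_lowc_def by blast
  have "\<forall>i. \<exists>p. i < N \<longrightarrow> krep nX nA (\<Psi> i) (fst p) (snd p)"
    using cpP choi by fastforce
  then obtain F where F: "\<forall>i. i < N \<longrightarrow> krep nX nA (\<Psi> i) (fst (F i)) (snd (F i))" by metis
  have "\<forall>i. \<exists>p. i < N \<longrightarrow> krep nY nB (\<Phi> i) (fst p) (snd p)"
    using qcF choi unfolding qchannel_def by fastforce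
  then obtain H where H: "\<forall>i. i < N \<longrightarrow> krep nY nB (\<Phi> i) (fst (H i)) (snd (H i))" by metis
  define s where "s i = fst (F i)" for i
  define U where "U i = snd (F i)" for i
  define t where "t i = fst (H i)" for i
  define V where "V i = snd (H i)" for i
  have kU: "krep nX nA (\<Psi> i) (s i) (U i)" if "i < N" for i using F that by (simp add: s_def U_def)
  have kV: "krep nY nB (\<Phi> i) (t i) (V i)" if "i < N" for i using H that by (simp add: t_def V_def)
  have Uc: "\<forall>i<N. U i \<in> carrier_mat (nA * s i) nX" using kU by (simp add: krep_def)
  have Vc: "\<forall>i<N. V i \<in> carrier_mat (nB * t i) nY" using kV by (simp add: krep_def)
  have Vi: "\<forall>i<N. adj (V i) * V i = 1\<^sub>m nY"
  proof (intro allI impI)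
    fix i assume i: "i < N"
    have lm: "is_lmap nY nB (\<Phi> i)" using qcF i by (simp add: qchannel_def cp_def)
    have tpi: "tp nY (\<Phi> i)" using qcF i by (simp add: qchannel_def)
    show "adj (V i) * V i = 1\<^sub>m nY"
    proof (rule eq_matI)
      fix y y' assume "y < dim_row (1\<^sub>m nY)" "y' < dim_col (1\<^sub>m nY)"
      then have y: "y < nY" "y' < nY" by auto
      have Pc: "\<Phi> i (munit nY y y') \<in> carrier_mat nB nB" using lm by (simp add: is_lmap_def)
      have "(adj (V i) * V i) $$ (y,y') = (\<Sum>r<nB * t i. cnj (V i $$ (r,y)) * V i $$ (r,y'))"
        using Vc i y by (intro adj_mult_index) auto
      also have "\<dots> = (\<Sum>b<nB. \<Sum>\<tau><t i. cnj (V i $$ (b * t i + \<tau>,y)) * V i $$ (b * t i + \<tau>,y'))"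
        by (rule sum_split_mult)
      also have "\<dots> = (\<Sum>b<nB. \<Phi> i (munit nY y y') $$ (b,b))"
        using kV[OF i] y by (intro sum.cong refl) (simp add: krep_def)
      also have "\<dots> = mtrace (\<Phi> i (munit nY y y'))" using Pc by (simp add: mtrace_def)
      also have "\<dots> = mtrace (munit nY y y')" using tpi by (simp add: tp_def)
      also have "\<dots> = 1\<^sub>m nY $$ (y,y')" using y by (simp add: mtrace_munit)
      finally show "(adj (V i) * V i) $$ (y,y') = 1\<^sub>m nY $$ (y,y')" .
    qed (use Vc i in auto)
  qed
  have Ui: "mat nX nX (\<lambda>(x,x'). \<Sum>i<N. (adj (U i) * U i) $$ (x,x')) = 1\<^sub>m nX"
  proof (rule eq_matI)
    fix x x' assume "x < dim_row (1\<^sub>m nX)" "x' < dim_col (1\<^sub>m nX)"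
    then have x: "x < nX" "x' < nX" by auto
    have "(\<Sum>i<N. (adj (U i) * U i) $$ (x,x')) = (\<Sum>i<N. \<Sum>a<nA. \<Psi> i (munit nX x x') $$ (a,a))"
    proof (rule sum.cong[OF refl])
      fix i assume "i \<in> {..<N}"
      then have i: "i < N" by simp
      have "(adj (U i) * U i) $$ (x,x') = (\<Sum>r<nA * s i. cnj (U i $$ (r,x)) * U i $$ (r,x'))"
        using Uc i x by (intro adj_mult_index) auto
      also have "\<dots> = (\<Sum>a<nA. \<Sum>\<sigma><s i. cnj (U i $$ (a * s i + \<sigma>,x)) * U i $$ (a * s i + \<sigma>,x'))"
        by (rule sum_split_mult)
      also have "\<dots> = (\<Sum>a<nA. \<Psi> i (munit nX x x') $$ (a,a))"
        using kU[OF i] x by (intro sum.cong refl) (simp add: krep_def)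
      finally show "(adj (U i) * U i) $$ (x,x') = (\<Sum>a<nA. \<Psi> i (munit nX x x') $$ (a,a))" .
    qed
    also have "\<dots> = mtrace (lsum nX nA {..<N} \<Psi> (munit nX x x'))"
      by (simp add: mtrace_lsum sum.swap[of _ "{..<N}"])
    also have "\<dots> = mtrace (munit nX x x')" using tpP by (simp add: tp_def)
    also have "\<dots> = 1\<^sub>m nX $$ (x,x')" using x by (simp add: mtrace_munit)
    finally show "mat nX nX (\<lambda>(x,x'). \<Sum>i<N. (adj (U i) * U i) $$ (x,x')) $$ (x,x') = 1\<^sub>m nX $$ (x,x')"
      using x by simp
  qed auto
  define W where "W = lowc_gen nX nY nA nB N s t U V"
  have WR: "W \<in> R_lowc nX nY nA nB" unfolding W_def using Uc Vc Vi Ui by (rule R_lowc.gen)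
  have D1: "density 1 (1\<^sub>m 1)"
  proof -
    have "nn (qf 1 (\<lambda>i j. 1\<^sub>m 1 $$ (i,j)) v)" for v by (simp add: qf_def nn_cnj_mult)
    then show ?thesis by (simp add: density_def psd_iff psdf_def mtrace_def)
  qed
  have fW: "fst W = 1" by (simp add: W_def lowc_gen_split)
  have "Gamma (nX*nY) (nA*nB) W (1\<^sub>m 1) = \<Gamma>"
    unfolding W_def gamma_gen[OF one_carrier_mat] G lsum_ltensor
  proof (rule from_units_eqI)
    fix p p' c c' assume a: "p < nX*nY" "p' < nX*nY" "c < nA*nB" "c' < nA*nB"
    then have b: "p div nY < nX" "p' div nY < nX" "c div nB < nA" "c' div nB < nA"
      "p mod nY < nY" "p' mod nY < nY" "c mod nB < nB" "c' mod nB < nB"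
      by (auto intro: mod_lt_of_lt_mult div_lt_of_lt_mult)
    have e: "(\<Sum>i<N. (\<Sum>\<sigma><s i. cnj (U i $$ ((c div nB)*s i+\<sigma>, p div nY)) * U i $$ ((c' div nB)*s i+\<sigma>, p' div nY)) *
            (\<Sum>\<tau><t i. cnj (V i $$ ((c mod nB)*t i+\<tau>, p mod nY)) * V i $$ ((c' mod nB)*t i+\<tau>, p' mod nY))) =
          (\<Sum>i<N. \<Psi> i (munit nX (p div nY) (p' div nY)) $$ (c div nB, c' div nB) *
            \<Phi> i (munit nY (p mod nY) (p' mod nY)) $$ (c mod nB, c' mod nB))"
      using kU kV b by (intro sum.cong refl) (simp add: krep_def)
    show "mat (nA*nB) (nA*nB) (\<lambda>(c,c'). 1\<^sub>m 1 $$ (0,0) *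
      (\<Sum>i<N. (\<Sum>\<sigma><s i. cnj (U i $$ ((c div nB)*s i+\<sigma>, p div nY)) * U i $$ ((c' div nB)*s i+\<sigma>, p' div nY)) *
            (\<Sum>\<tau><t i. cnj (V i $$ ((c mod nB)*t i+\<tau>, p mod nY)) * V i $$ ((c' mod nB)*t i+\<tau>, p' mod nY)))) $$ (c,c') =
      mat (nA*nB) (nA*nB) (\<lambda>(c,c'). \<Sum>i<N.
      \<Psi> i (munit nX (p div nY) (p' div nY)) $$ (c div nB, c' div nB) *
      \<Phi> i (munit nY (p mod nY) (p' mod nY)) $$ (c mod nB, c' mod nB)) $$ (c,c')"
      using a e by simp
  qed
  then have "\<Gamma> = Gamma (nX*nY) (nA*nB) W (1\<^sub>m 1) \<and> W \<in> R_lowc nX nY nA nB \<and> density (fst W) (1\<^sub>m 1)"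
    using WR D1 fW by simp
  then show "\<Gamma> \<in> QC (nX*nY) (nA*nB) (R_lowc nX nY nA nB)"
    unfolding QC_def by blast
qed


theorem proposition5p10:
  fixes nX nY nA nB :: nat
  assumes "nX \<ge> 1" and "nY \<ge> 1" and "nA \<ge> 1" and "nB \<ge> 1"
  shows "is_resource (nX*nY) (nA*nB) (R_lowc nX nY nA nB) \<and>
         QC (nX*nY) (nA*nB) (R_lowc nX nY nA nB) = Q_lowc nX nY nA nB"
proof -
  have "is_resource (nX*nY) (nA*nB) (R_lowc nX nY nA nB)"
    unfolding is_resource_def
  proof (intro conjI ballI impI)
    fix W assume "W \<in> R_lowc nX nY nA nB"
    then show "is_boi (nX*nY) (nA*nB) W" by (rule R_boi)
  next
    fix W1 W2 assume "W1 \<in> R_lowc nX nY nA nB" "W2 \<in> R_lowc nX nY nA nB"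
    then show "bdsum (nX*nY) (nA*nB) W1 W2 \<in> R_lowc nX nY nA nB" by (rule R_lowc.dsum)
  next
    fix S :: "complex mat" assume "S \<in> carrier_mat (nX*nY) (nA*nB)" "S \<noteq> 0\<^sub>m (nX*nY) (nA*nB)"
    then show "\<exists>W\<in>R_lowc nX nY nA nB. phi (nX*nY) (nA*nB) W S \<noteq> 0\<^sub>m (fst (snd W)) (fst W)"
      by (rule separating)
  qed
  then show ?thesis using QC_sub Q_sub by blast
qed

end
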